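(* Let $\mathcal{E},\mathcal{F},\mathcal{G}\in\mathbb{R}[[u,v]]$ be formal power series of the normalized form given in the context (with constants $a_{2,0},a_{1,1}\in\mathbb{R}$, $a_{0,2}>0$), and fix real numbers $b_3,b_4,\dots$. Then for each integer $m\ge2$ there exists a unique $m$-th formal solution $(\mathcal{X}_{m+1},\mathcal{Y}_{m-1},\mathcal{Z}_m)$.
   Context: For $P\in\mathbb{R}[[u,v]]$ write $P=\sum_{k,l\ge0}\frac{P(k,l)}{k!\,l!}u^kv^l$; $P$ has order at least $n$ if $P(k,l)=0$ for $k+l<n$, and $\mathcal{O}_n$ denotes the ideal of such series. The normalized form: $\mathcal{E}=1+a_{2,0}^2u^2+2a_{2,0}a_{1,1}uv+(1+a_{1,1}^2)v^2+\mathcal{O}_3$, $\mathcal{F}=a_{2,0}a_{1,1}u^2+(a_{2,0}a_{0,2}+a_{1,1}^2+1)uv+a_{1,1}a_{0,2}v^2+\mathcal{O}_3$, $\mathcal{G}=(1+a_{1,1}^2)u^2+2a_{1,1}a_{0,2}uv+a_{0,2}^2v^2+\mathcal{O}_3$. For $m\ge2$, an $m$-th formal solution is a triple of polynomials $\mathcal{X}_{m+1}=u+\sum_{2\le k+l\le m+1}\frac{X(k,l)}{k!l!}u^kv^l$, $\mathcal{Y}_{m-1}=\sum_{1\le k+l\le m-1}\frac{Y(k,l)}{k!l!}u^kv^l$, $\mathcal{Z}_m=\sum_{2\le k+l\le m}\frac{Z(k,l)}{k!l!}u^kv^l$ with real coefficients, such that $Y(0,1)>0$, $Z(0,2)>0$,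 and, setting $\beta_{m+1}(t)=\sum_{j=3}^{m+1}\frac{b_j}{j!}t^j$ and $f^m=(\mathcal{X}_{m+1},\;\mathcal{X}_{m+1}\mathcal{Y}_{m-1}+\beta_{m+1}(\mathcal{Y}_{m-1}),\;\mathcal{Z}_m)$ (a triple of polynomials in $u,v$), $\mathcal{E}-f^m_u\cdot f^m_u\in\mathcal{O}_{m+1}$, $\mathcal{F}-f^m_u\cdot f^m_v\in\mathcal{O}_{m+1}$, $\mathcal{G}-f^m_v\cdot f^m_v\in\mathcal{O}_{m+1}$, where $\cdot$ is the Euclidean inner product and subscripts denote partial derivatives. *)

theory Defs
  imports Complex_Main
begin

text \<open>A formal power series P in R[[u,v]] is represented by its paper-convention
coefficients P(k,l), i.e. P = sum_{k,l} P(k,l)/(k! l!) u^k v^l.\<close>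

type_synonym fps2 = "nat \<Rightarrow> nat \<Rightarrow> real"

definition fps2_const :: "real \<Rightarrow> fps2" where
  "fps2_const c = (\<lambda>k l. if k = 0 \<and> l = 0 then c else 0)"

definition fps2_monom :: "nat \<Rightarrow> nat \<Rightarrow> fps2" where
  "fps2_monom a b = (\<lambda>k l. if k = a \<and> l = b then fact a * fact b else 0)"

definition fps2_add :: "fps2 \<Rightarrow> fps2 \<Rightarrow> fps2" where
  "fps2_add P Q = (\<lambda>k l. P k l + Q k l)"

definition fps2_diff :: "fps2 \<Rightarrow> fps2 \<Rightarrow> fps2" where
  "fps2_diff P Q = (\<lambda>k l. P k l - Q k l)"

definition fps2_scale :: "real \<Rightarrow> fps2 \<Rightarrow> fps2" where
  "fps2_scale c P = (\<lambda>k l. c * P k l)"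

text \<open>Product (Leibniz rule in the factorial-normalised coefficients).\<close>
definition fps2_mult :: "fps2 \<Rightarrow> fps2 \<Rightarrow> fps2" where
  "fps2_mult P Q = (\<lambda>k l. \<Sum>i\<le>k. \<Sum>j\<le>l.
      of_nat (k choose i) * of_nat (l choose j) * P i j * Q (k - i) (l - j))"

primrec fps2_pow :: "fps2 \<Rightarrow> nat \<Rightarrow> fps2" where
  "fps2_pow P 0 = fps2_const 1"
| "fps2_pow P (Suc n) = fps2_mult P (fps2_pow P n)"

definition fps2_du :: "fps2 \<Rightarrow> fps2" where
  "fps2_du P = (\<lambda>k l. P (Suc k) l)"

definition fps2_dv :: "fps2 \<Rightarrow> fps2" where
  "fps2_dv P = (\<lambda>k l. P k (Suc l))"

definition fps2_order_ge :: "nat \<Rightarrow> fps2 \<Rightarrow> bool" where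
  "fps2_order_ge n P \<longleftrightarrow> (\<forall>k l. k + l < n \<longrightarrow> P k l = 0)"

definition fps2_dot :: "fps2 \<times> fps2 \<times> fps2 \<Rightarrow> fps2 \<times> fps2 \<times> fps2 \<Rightarrow> fps2" where
  "fps2_dot p q = (case p of (p1, p2, p3) \<Rightarrow> case q of (q1, q2, q3) \<Rightarrow>
      fps2_add (fps2_add (fps2_mult p1 q1) (fps2_mult p2 q2)) (fps2_mult p3 q3))"

definition normalized_EFG :: "real \<Rightarrow> real \<Rightarrow> real \<Rightarrow> fps2 \<Rightarrow> fps2 \<Rightarrow> fps2 \<Rightarrow> bool" where
  "normalized_EFG a20 a11 a02 E F G \<longleftrightarrow>
     fps2_order_ge 3 (fps2_diff E
        (fps2_add (fps2_add (fps2_add (fps2_const 1)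
           (fps2_scale (a20^2) (fps2_monom 2 0)))
           (fps2_scale (2 * a20 * a11) (fps2_monom 1 1)))
           (fps2_scale (1 + a11^2) (fps2_monom 0 2)))) \<and>
     fps2_order_ge 3 (fps2_diff F
        (fps2_add (fps2_add
           (fps2_scale (a20 * a11) (fps2_monom 2 0))
           (fps2_scale (a20 * a02 + a11^2 + 1) (fps2_monom 1 1)))
           (fps2_scale (a11 * a02) (fps2_monom 0 2)))) \<and>
     fps2_order_ge 3 (fps2_diff G
        (fps2_add (fps2_add
           (fps2_scale (1 + a11^2) (fps2_monom 2 0))
           (fps2_scale (2 * a11 * a02) (fps2_monom 1 1)))
           (fps2_scale (a02^2) (fps2_monom 0 2))))"

definition beta_comp :: "(nat \<Rightarrow> real) \<Rightarrow> nat \<Rightarrow> fps2 \<Rightarrow> fps2" where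
  "beta_comp b m Y = (\<lambda>k l. \<Sum>j\<in>{3..m+1}. b j / fact j * fps2_pow Y j k l)"

definition formal_solution ::
  "fps2 \<Rightarrow> fps2 \<Rightarrow> fps2 \<Rightarrow> (nat \<Rightarrow> real) \<Rightarrow> nat \<Rightarrow> fps2 \<Rightarrow> fps2 \<Rightarrow> fps2 \<Rightarrow> bool" where
  "formal_solution E F G b m X Y Z \<longleftrightarrow>
     (\<forall>k l. (k + l < 2 \<or> m + 1 < k + l) \<longrightarrow> X k l = (if k = 1 \<and> l = 0 then 1 else 0)) \<and>
     (\<forall>k l. (k + l < 1 \<or> m - 1 < k + l) \<longrightarrow> Y k l = 0) \<and>
     (\<forall>k l. (k + l < 2 \<or> m < k + l) \<longrightarrow> Z k l = 0) \<and>
     Y 0 1 > 0 \<and> Z 0 2 > 0 \<and>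
     (let f = (X, fps2_add (fps2_mult X Y) (beta_comp b m Y), Z);
          fu = (case f of (f1, f2, f3) \<Rightarrow> (fps2_du f1, fps2_du f2, fps2_du f3));
          fv = (case f of (f1, f2, f3) \<Rightarrow> (fps2_dv f1, fps2_dv f2, fps2_dv f3))
      in fps2_order_ge (m + 1) (fps2_diff E (fps2_dot fu fu)) \<and>
         fps2_order_ge (m + 1) (fps2_diff F (fps2_dot fu fv)) \<and>
         fps2_order_ge (m + 1) (fps2_diff G (fps2_dot fv fv)))"

end

theory Submission
  imports Defs "HOL-Computational_Algebra.Formal_Power_Series"
begin

unbundle fps_syntax


definition sysE :: "nat \<Rightarrow> real \<Rightarrow> real \<Rightarrow> (nat \<Rightarrow> real) \<Rightarrow> (nat \<Rightarrow> real) \<Rightarrow> (nat \<Rightarrow> real) \<Rightarrow> nat \<Rightarrow> real" where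
  "sysE n a20 a11 x y z l = (real n - real l + 1) * x l
     + (if l = 0 then 0 else (real n - real l + 1) * (y (l-1) + a11 * z (l-1)))
     + a20 * (real n - real l) * z l"

definition sysF :: "nat \<Rightarrow> real \<Rightarrow> real \<Rightarrow> real \<Rightarrow> (nat \<Rightarrow> real) \<Rightarrow> (nat \<Rightarrow> real) \<Rightarrow> (nat \<Rightarrow> real) \<Rightarrow> nat \<Rightarrow> real" where
  "sysF n a20 a11 a02 x y z l = (real l + 1) * x (l+1) + real n * y l + a20 * (real l + 1) * z (l+1)
     + a11 * real n * z l + (if l = 0 then 0 else a02 * (real n - real l + 1) * z (l-1))"

definition sysG :: "real \<Rightarrow> real \<Rightarrow> (nat \<Rightarrow> real) \<Rightarrow> (nat \<Rightarrow> real) \<Rightarrow> nat \<Rightarrow> real" where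
  "sysG a11 a02 y z l = (real l + 1) * y (l+1) + a11 * (real l + 1) * z (l+1) + a02 * real l * z l"

text \<open>The combination H_l = (n-l) F_l - (l+1) E_{l+1}, free of x.\<close>
definition sysH :: "nat \<Rightarrow> real \<Rightarrow> real \<Rightarrow> real \<Rightarrow> (nat \<Rightarrow> real) \<Rightarrow> (nat \<Rightarrow> real) \<Rightarrow> nat \<Rightarrow> real" where
  "sysH n a20 a11 a02 y z l = (real n - real l) * (real n - real l - 1) * y l + a20 * (real l + 1) * z (l+1)
     + a11 * (real n - real l) * (real n - real l - 1) * z l
     + (if l = 0 then 0 else a02 * (real n - real l) * (real n - real l + 1) * z (l-1))"

lemma sysH_eq: "sysH n a20 a11 a02 y z l =
   (real n - real l) * sysF n a20 a11 a02 x y z l - (real l + 1) * sysE n a20 a11 x y z (l+1)"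
  unfolding sysH_def sysF_def sysE_def by (simp add: algebra_simps)

lemma sys_z_zero:
  assumes a02: "a02 > 0" and n: "n \<ge> 2"
    and z0: "\<forall>l>n. z l = 0" and y0: "\<forall>l\<ge>n. y l = 0"
    and G: "\<forall>l\<le>n. sysG a11 a02 y z l = 0" and H: "\<forall>l<n. sysH n a20 a11 a02 y z l = 0"
  shows "\<forall>l. z l = 0"
proof -
  have zn: "z n = 0" using G[rule_format, of n] z0 y0 a02 n by (simp add: sysG_def)
  have zn1: "z (n-1) = 0"
  proof -
    have "sysG a11 a02 y z (n-1) = 0" using G by simp
    then have "a02 * real (n-1) * z (n-1) = 0" using zn y0 n by (simp add: sysG_def)
    then show ?thesis using a02 n by simp
  qed
  have step: "z (j-1) = 0" if j: "1 \<le> j" "j \<le> n - 1" and zj: "z j = 0" "z (j+1) = 0" for j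
  proof -
    have h: "sysH n a20 a11 a02 y z j = 0" using H j by simp
    have g: "sysG a11 a02 y z (j-1) = 0" using G j by simp
    have jj: "Suc (j - 1) = j" using j by simp
    have h': "(real n - real j) * (real n - real j - 1) * y j + a02 * (real n - real j) * (real n - real j + 1) * z (j-1) = 0"
      using h zj j by (simp add: sysH_def)
    have g': "real j * y j + a02 * (real j - 1) * z (j-1) = 0"
      using g zj j jj by (simp add: sysG_def of_nat_diff)
    have "a02 * (real n - real j) * (real n + real j - 1) * z (j-1) =
       real j * ((real n - real j) * (real n - real j - 1) * y j + a02 * (real n - real j) * (real n - real j + 1) * z (j-1))
       - (real n - real j) * (real n - real j - 1) * (real j * y j + a02 * (real j - 1) * z (j-1))"
      by (simp add: algebra_simps)
    also have "\<dots> = 0" using h' g' by simp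
    finally have "a02 * (real n - real j) * (real n + real j - 1) * z (j-1) = 0" .
    moreover have "real n - real j > 0" "real n + real j - 1 > 0" using j by auto
    ultimately show ?thesis using a02 by simp
  qed
  have ind: "z (n - t) = 0 \<and> z (n + 1 - t) = 0" if "t \<le> n" for t
    using that
  proof (induction t)
    case 0 then show ?case using zn z0 by simp
  next
    case (Suc t)
    show ?case
    proof (cases t)
      case 0 then show ?thesis using zn zn1 n by simp
    next
      case (Suc t')
      have a: "1 \<le> n - t" "n - t \<le> n - 1" using Suc.prems Suc by auto
      have b: "z (n - t) = 0" "z (n - t + 1) = 0" using Suc.IH Suc.prems Suc_diff_le by auto
      have "z (n - t - 1) = 0" by (rule step[OF a b])
      then show ?thesis using Suc.IH Suc.prems by (simp add: Suc_diff_le)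
    qed
  qed
  show ?thesis
  proof
    fix l show "z l = 0"
    proof (cases "l \<le> n")
      case True then show ?thesis using ind[of "n - l"] by simp
    next
      case False then show ?thesis using z0 by simp
    qed
  qed
qed

lemma sys_unique:
  assumes a02: "a02 > 0" and n: "n \<ge> 2"
    and z0: "\<forall>l>n. z l = 0" and y0: "\<forall>l\<ge>n. y l = 0"
    and E: "\<forall>l\<le>n. sysE n a20 a11 x y z l = 0"
    and F: "\<forall>l\<le>n. sysF n a20 a11 a02 x y z l = 0"
    and G: "\<forall>l\<le>n. sysG a11 a02 y z l = 0"
  shows "(\<forall>l\<le>n+1. x l = 0) \<and> (\<forall>l. y l = 0) \<and> (\<forall>l. z l = 0)"
proof -
  have H: "\<forall>l<n. sysH n a20 a11 a02 y z l = 0"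
    using E F by (auto simp: sysH_eq[of _ _ _ _ y z _ x])
  have z: "\<forall>l. z l = 0" by (rule sys_z_zero[OF a02 n z0 y0 G H])
  have y: "\<forall>l. y l = 0"
  proof
    fix j show "y j = 0"
    proof (cases "j = 0")
      case True
      have "sysH n a20 a11 a02 y z 0 = 0" using H n by simp
      then have "real n * (real n - 1) * y 0 = 0" using z by (simp add: sysH_def)
      moreover have "real n * (real n - 1) \<noteq> 0" using n by simp
      ultimately show ?thesis using True by simp
    next
      case False
      show ?thesis
      proof (cases "j < n")
        case True
        have "sysG a11 a02 y z (j-1) = 0" using G True by simp
        then have "real j * y j = 0" using z False by (simp add: sysG_def of_nat_diff)
        then show ?thesis using False by simp
      next
        case False then show ?thesis using y0 by simp
      qed
    qed
  qed
  have x: "\<forall>l\<le>n+1. x l = 0"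
  proof (intro allI impI)
    fix l assume l: "l \<le> n + 1"
    show "x l = 0"
    proof (cases "l \<le> n")
      case True
      have "sysE n a20 a11 x y z l = 0" using E True by simp
      moreover have "(if l = 0 then 0 else (real n - real l + 1) * (y (l - 1) + a11 * z (l - 1))) = 0"
        "a20 * (real n - real l) * z l = 0" using y z by auto
      ultimately have "(real n - real l + 1) * x l = 0" unfolding sysE_def by simp
      moreover have "real n - real l + 1 \<noteq> 0" using True by simp
      ultimately show ?thesis by simp
    next
      case False
      then have ln: "l = n + 1" using l by simp
      have "sysF n a20 a11 a02 x y z n = 0" using F by simp
      moreover have "real n * y n + a20 * (real n + 1) * z (n+1) + a11 * real n * z n
         + (if n = 0 then 0 else a02 * (real n - real n + 1) * z (n-1)) = 0" using y z by simp
      ultimately have "(real n + 1) * x (n+1) = 0" unfolding sysF_def by linarith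
      then show ?thesis using ln by (simp add: add_nonneg_eq_0_iff)
    qed
  qed
  show ?thesis using x y z by blast
qed

fun zz :: "nat \<Rightarrow> real \<Rightarrow> real \<Rightarrow> real \<Rightarrow> (nat \<Rightarrow> real) \<Rightarrow> (nat \<Rightarrow> real) \<Rightarrow> nat \<Rightarrow> real" where
  "zz n a20 a11 a02 g h 0 = g n / (a02 * real n)"
| "zz n a20 a11 a02 g h (Suc 0) = (g (n-1) - a11 * real n * zz n a20 a11 a02 g h 0) / (a02 * (real n - 1))"
| "zz n a20 a11 a02 g h (Suc (Suc t)) = (let j = n - 1 - t; zj1 = zz n a20 a11 a02 g h t;
      zj = zz n a20 a11 a02 g h (Suc t);
      g' = g (j-1) - a11 * real j * zj;
      h' = h j - a20 * (real j + 1) * zj1 - a11 * (real n - real j) * (real n - real j - 1) * zj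
    in (real j * h' - (real n - real j) * (real n - real j - 1) * g') / (a02 * (real n - real j) * (real n + real j - 1)))"

lemma sys_exists:
  assumes a02: "a02 > 0" and n: "n \<ge> 2"
  shows "\<exists>x y z. (\<forall>l>n. z l = 0) \<and> (\<forall>l\<ge>n. y l = 0) \<and>
    (\<forall>l\<le>n. sysE n a20 a11 x y z l = e l \<and> sysF n a20 a11 a02 x y z l = f l \<and> sysG a11 a02 y z l = g l)"
proof -
  define h where "h l = (real n - real l) * f l - (real l + 1) * e (l+1)" for l
  define z where "z l = (if l \<le> n then zz n a20 a11 a02 g h (n - l) else 0)" for l
  define y where "y j = (if j = 0 then (h 0 - a20 * z 1 - a11 * real n * (real n - 1) * z 0) / (real n * (real n - 1))
     else if j < n then (g (j-1) - a11 * real j * z j - a02 * (real j - 1) * z (j-1)) / real j else 0)" for j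
  define x where "x l = (if l \<le> n then (e l - (if l = 0 then 0 else (real n - real l + 1) * (y (l-1) + a11 * z (l-1)))
      - a20 * (real n - real l) * z l) / (real n - real l + 1)
     else (f n - (real n * y n + a20 * (real n + 1) * z (n+1) + a11 * real n * z n + a02 * z (n-1))) / (real n + 1))" for l
  have z0: "\<forall>l>n. z l = 0" by (simp add: z_def)
  have y0: "\<forall>l\<ge>n. y l = 0" using n by (simp add: y_def)
  have E: "sysE n a20 a11 x y z l = e l" if "l \<le> n" for l
  proof -
    have "real n - real l + 1 \<noteq> 0" using that by simp
    then show ?thesis using that unfolding sysE_def x_def by (simp add: field_simps)
  qed
  have Gn: "sysG a11 a02 y z n = g n"
    using a02 n by (simp add: sysG_def y_def z_def)
  have Gn1: "sysG a11 a02 y z (n-1) = g (n-1)"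
  proof -
    have e: "Suc (n - Suc 0) = n" "n - (n - Suc 0) = Suc 0" using n by auto
    have "real n - 1 \<noteq> 0" using n by simp
    then show ?thesis using a02 n unfolding sysG_def
      by (simp add: y_def z_def e of_nat_diff field_simps)
  qed
  have Gl: "sysG a11 a02 y z l = g l" if "l + 2 \<le> n" for l
  proof -
    have "real l + 1 \<noteq> 0" by simp
    then show ?thesis using that unfolding sysG_def y_def by (simp add: field_simps)
  qed
  have G: "sysG a11 a02 y z l = g l" if "l \<le> n" for l
  proof -
    have "l = n \<or> l = n - 1 \<or> l + 2 \<le> n" using that by arith
    then show ?thesis using Gn Gn1 Gl by auto
  qed
  have H0: "sysH n a20 a11 a02 y z 0 = h 0"
  proof -
    have "real n * (real n - 1) \<noteq> 0" using n by simp
    then show ?thesis using n unfolding sysH_def y_def by (simp add: field_simps)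
  qed
  have Hl: "sysH n a20 a11 a02 y z l = h l" if l: "1 \<le> l" "l < n" for l
  proof -
    define t where "t = n - 1 - l"
    have t1: "n - (l - 1) = Suc (Suc t)" "n - l = Suc t" "n - (l+1) = t" "n - 1 - t = l" using l by (auto simp: t_def)
    have zl1: "z (l - 1) = (let j = l; zj1 = z (l+1); zj = z l;
      g' = g (j-1) - a11 * real j * zj;
      h' = h j - a20 * (real j + 1) * zj1 - a11 * (real n - real j) * (real n - real j - 1) * zj
    in (real j * h' - (real n - real j) * (real n - real j - 1) * g') / (a02 * (real n - real j) * (real n + real j - 1)))"
    proof -
      have i: "l - 1 \<le> n" "l + 1 \<le> n" "l \<le> n" using l by auto
      have za: "z (l-1) = zz n a20 a11 a02 g h (Suc (Suc t))"
        unfolding z_def if_P[OF i(1)] t1(1) ..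
      have zb: "z (l+1) = zz n a20 a11 a02 g h t"
        unfolding z_def if_P[OF i(2)] t1(3) ..
      have zc: "z l = zz n a20 a11 a02 g h (Suc t)"
        unfolding z_def if_P[OF i(3)] t1(2) ..
      show ?thesis unfolding za zz.simps(3) Let_def t1(4) zb[symmetric] zc[symmetric] by simp
    qed
    have yl: "y l = (g (l-1) - a11 * real l * z l - a02 * (real l - 1) * z (l-1)) / real l"
      using l by (simp add: y_def)
    have nz: "a02 * (real n - real l) * (real n + real l - 1) \<noteq> 0" "real l \<noteq> 0" using l a02 by auto
    have lr: "real (l - 1) = real l - 1" using l by (simp add: of_nat_diff)
    have l0: "l \<noteq> 0" using l by simp
    have eY: "real l * y l = g (l-1) - a11 * real l * z l - a02 * (real l - 1) * z (l-1)"
      using yl nz by simp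
    have eZ: "a02 * (real n - real l) * (real n + real l - 1) * z (l-1) =
      real l * (h l - a20 * (real l + 1) * z (l+1) - a11 * (real n - real l) * (real n - real l - 1) * z l)
      - (real n - real l) * (real n - real l - 1) * (g (l-1) - a11 * real l * z l)"
      using nz unfolding zl1 Let_def by simp
    have key: "real l * (sysH n a20 a11 a02 y z l - h l) =
      (real n - real l) * (real n - real l - 1) * (real l * y l - (g (l-1) - a11 * real l * z l - a02 * (real l - 1) * z (l-1)))
      + (a02 * (real n - real l) * (real n + real l - 1) * z (l-1) -
      (real l * (h l - a20 * (real l + 1) * z (l+1) - a11 * (real n - real l) * (real n - real l - 1) * z l)
      - (real n - real l) * (real n - real l - 1) * (g (l-1) - a11 * real l * z l)))"
      unfolding sysH_def if_not_P[OF l0] by (simp add: algebra_simps)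
    have "real l * (sysH n a20 a11 a02 y z l - h l) = 0" unfolding key eY eZ by simp
    then show ?thesis using nz by simp
  qed
  have H: "sysH n a20 a11 a02 y z l = h l" if "l < n" for l
    using H0 Hl that by (cases "l = 0") auto
  have F: "sysF n a20 a11 a02 x y z l = f l" if "l \<le> n" for l
  proof (cases "l = n")
    case True
    have "real n + 1 \<noteq> 0" by simp
    then show ?thesis using True n unfolding sysF_def x_def by (simp add: field_simps)
  next
    case False
    then have l: "l < n" using that by simp
    have "(real n - real l) * sysF n a20 a11 a02 x y z l = sysH n a20 a11 a02 y z l + (real l + 1) * sysE n a20 a11 x y z (l+1)"
      using sysH_eq[of n a20 a11 a02 y z l x] by simp
    also have "\<dots> = (real n - real l) * f l" using H[OF l] E[of "l+1"] l by (simp add: h_def)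
    finally show ?thesis using l by simp
  qed
  show ?thesis using z0 y0 E F G by blast
qed




type_synonym R = "real fps fps"

definition Phi :: "fps2 \<Rightarrow> R" where
  "Phi P = Abs_fps (\<lambda>k. Abs_fps (\<lambda>l. P k l / (fact k * fact l)))"

lemma Phi_nth[simp]: "Phi P $ k $ l = P k l / (fact k * fact l)"
  by (simp add: Phi_def)

lemma Phi_eq_iff: "Phi P = Phi Q \<longleftrightarrow> P = Q"
proof
  assume "Phi P = Phi Q"
  then have "\<And>k l. Phi P $ k $ l = Phi Q $ k $ l" by simp
  then show "P = Q" by (intro ext) (simp add: field_simps)
qed simp

lemma Phi_add: "Phi (fps2_add P Q) = Phi P + Phi Q"
  by (intro fps_ext) (simp add: fps2_add_def add_divide_distrib)

lemma Phi_diff: "Phi (fps2_diff P Q) = Phi P - Phi Q"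
  by (intro fps_ext) (simp add: fps2_diff_def diff_divide_distrib)

definition sc :: "real \<Rightarrow> R" where "sc c = fps_const (fps_const c)"

lemma sc_nth[simp]: "sc c $ k $ l = (if k = 0 \<and> l = 0 then c else 0)"
  by (simp add: sc_def)

lemma Phi_scale: "Phi (fps2_scale c P) = sc c * Phi P"
  by (intro fps_ext) (simp add: fps2_scale_def sc_def)

lemma Phi_const: "Phi (fps2_const c) = sc c"
  by (intro fps_ext) (simp add: fps2_const_def)

lemma Phi_mult: "Phi (fps2_mult P Q) = Phi P * Phi Q"
proof -
  have *: "(Phi P * Phi Q) $ k $ l = Phi (fps2_mult P Q) $ k $ l" for k l
  proof -
  have "(Phi P * Phi Q) $ k $ l = (\<Sum>i=0..k. \<Sum>j=0..l. Phi P $ i $ j * Phi Q $ (k-i) $ (l-j))"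
    by (simp add: fps_mult_nth fps_sum_nth)
  also have "\<dots> = (\<Sum>i=0..k. \<Sum>j=0..l. of_nat (k choose i) * of_nat (l choose j) * P i j * Q (k - i) (l - j)
        / (fact k * fact l))"
    by (intro sum.cong refl) (simp add: binomial_fact field_simps)
  also have "\<dots> = Phi (fps2_mult P Q) $ k $ l"
    by (simp add: fps2_mult_def sum_divide_distrib atLeast0AtMost)
  finally show ?thesis .
  qed
  show ?thesis by (intro fps_ext) (simp only: *)
qed

lemma Phi_pow: "Phi (fps2_pow P n) = Phi P ^ n"
  by (induction n) (simp_all add: Phi_const Phi_mult sc_def)

definition Dv :: "R \<Rightarrow> R" where "Dv F = Abs_fps (\<lambda>k. fps_deriv (F $ k))"
abbreviation Du :: "R \<Rightarrow> R" where "Du \<equiv> fps_deriv"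

lemma Dv_nth[simp]: "Dv F $ k $ l = of_nat (l+1) * F $ k $ (l+1)"
  by (simp add: Dv_def)

lemma fact_aux: "real (Suc k) * x / (fact (Suc k) * y) = x / (fact k * (y::real))"
proof -
  have "fact (Suc k) = real (Suc k) * (fact k :: real)" by (simp only: fact_Suc)
  then show ?thesis by (simp del: of_nat_Suc)
qed
lemma fact_aux2: "real (Suc k) * x / (y * fact (Suc k)) = x / (y * (fact k::real))"
  using fact_aux[of k x y] by (simp add: mult.commute)


lemma ofnat_nth[simp]: "(of_nat c * (f::real fps)) $ l = of_nat c * f $ l"
  by (simp flip: fps_of_nat)

lemma ofnat_nth2[simp]: "(of_nat c * (f::R)) $ k = of_nat c * f $ k"
  by (simp flip: fps_of_nat)

lemma Du_nth[simp]: "Du F $ k $ l = of_nat (k+1) * F $ (k+1) $ l"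
  by (simp del: of_nat_Suc of_nat_add)

lemma Phi_du: "Phi (fps2_du P) = Du (Phi P)"
proof (intro fps_ext)
  fix k l
  show "Phi (fps2_du P) $ k $ l = Du (Phi P) $ k $ l"
    unfolding Du_nth Phi_nth fps2_du_def using fact_aux[of k "P (Suc k) l" "fact l"] by simp
qed

lemma Phi_dv: "Phi (fps2_dv P) = Dv (Phi P)"
proof (intro fps_ext)
  fix k l
  show "Phi (fps2_dv P) $ k $ l = Dv (Phi P) $ k $ l"
    unfolding Dv_nth Phi_nth fps2_dv_def using fact_aux2[of l "P k (Suc l)" "fact k"] by simp
qed

lemma Dv_nth1: "Dv F $ k = fps_deriv (F $ k)"
  by (simp add: Dv_def)

lemma Dv_add[simp]: "Dv (F + G) = Dv F + Dv G"
  by (intro fps_ext) (simp add: Dv_nth1)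
lemma Dv_diff[simp]: "Dv (F - G) = Dv F - Dv G"
  by (intro fps_ext) (simp add: Dv_nth1)
lemma Dv_minus[simp]: "Dv (- F) = - Dv F"
  by (intro fps_ext) (simp add: Dv_nth1)
lemma Dv_mult[simp]: "Dv (F * G) = Dv F * G + F * Dv G"
proof (rule fps_ext)
  fix k
  show "Dv (F * G) $ k = (Dv F * G + F * Dv G) $ k"
    by (simp add: Dv_nth1 fps_mult_nth fps_deriv_sum sum.distrib)
qed
lemma Dv_sc[simp]: "Dv (sc c) = 0"
  by (intro fps_ext) (simp add: Dv_nth1 sc_def)
lemma Dv_one[simp]: "Dv 1 = 0"
  by (intro fps_ext) (simp add: Dv_nth1)
lemma Dv_zero[simp]: "Dv 0 = 0"
  by (intro fps_ext) (simp add: Dv_nth1)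
lemma Dv_power: "Dv (F ^ Suc n) = of_nat (Suc n) * F ^ n * Dv F"
  by (induction n) (simp_all add: algebra_simps)

definition U :: R where "U = fps_X"
definition V :: R where "V = fps_const fps_X"

lemma U_nth[simp]: "U $ k $ l = (if k = 1 \<and> l = 0 then 1 else 0)"
  by (simp add: U_def)
lemma V_nth[simp]: "V $ k $ l = (if k = 0 \<and> l = 1 then 1 else 0)"
  by (simp add: V_def)
lemma Du_U[simp]: "Du U = 1" by (simp add: U_def)
lemma Du_V[simp]: "Du V = 0" by (simp add: V_def)
lemma Du_sc[simp]: "Du (sc c) = 0" by (simp add: sc_def)
lemma Dv_U[simp]: "Dv U = 0" by (intro fps_ext) (simp add: Dv_nth1 U_def)
lemma Dv_V[simp]: "Dv V = 1" by (intro fps_ext) (simp add: Dv_nth1 V_def)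

lemma U_mult_nth: "(U * F) $ k $ l = (if k = 0 then 0 else F $ (k - 1) $ l)"
  by (cases k) (simp_all add: U_def)

lemma V_mult_nth: "(V * F) $ k $ l = (if l = 0 then 0 else F $ k $ (l - 1))"
  by (cases l) (simp_all add: V_def)

lemma sc_mult_nth[simp]: "(sc c * F) $ k $ l = c * F $ k $ l"
  by (simp add: sc_def)

lemma sc_mult[simp]: "sc a * sc b = sc (a * b)" by (simp add: sc_def)
lemma sc_add: "sc a + sc b = sc (a + b)" by (simp add: sc_def)
lemma sc_one[simp]: "sc 1 = 1" by (simp add: sc_def)
lemma sc_zero[simp]: "sc 0 = 0" by (simp add: sc_def)

definition ordn :: "nat \<Rightarrow> R \<Rightarrow> bool" where
  "ordn n F \<longleftrightarrow> (\<forall>k l. k + l < n \<longrightarrow> F $ k $ l = 0)"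

lemma Phi_order: "fps2_order_ge n P \<longleftrightarrow> ordn n (Phi P)"
  by (simp add: fps2_order_ge_def ordn_def)

lemma ordnD: "ordn n F \<Longrightarrow> k + l < n \<Longrightarrow> F $ k $ l = 0"
  by (simp add: ordn_def)

lemma ordn_0[simp]: "ordn 0 F" by (simp add: ordn_def)
lemma ordn_zero[simp]: "ordn n 0" by (simp add: ordn_def)
lemma ordn_mono: "ordn n F \<Longrightarrow> m \<le> n \<Longrightarrow> ordn m F"
  by (simp add: ordn_def)
lemma ordn_add: "ordn n F \<Longrightarrow> ordn n G \<Longrightarrow> ordn n (F + G)"
  by (simp add: ordn_def)
lemma ordn_diff: "ordn n F \<Longrightarrow> ordn n G \<Longrightarrow> ordn n (F - G)"
  by (simp add: ordn_def)
lemma ordn_minus: "ordn n F \<Longrightarrow> ordn n (- F)"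
  by (simp add: ordn_def)
lemma ordn_sc: "ordn n F \<Longrightarrow> ordn n (sc c * F)"
  by (simp add: ordn_def)
lemma ordn_ofnat: "ordn n F \<Longrightarrow> ordn n (of_nat c * F)"
  by (simp add: ordn_def)
lemma ordn_Du: "ordn (Suc n) F \<Longrightarrow> ordn n (Du F)"
  by (simp add: ordn_def del: of_nat_Suc of_nat_add)
lemma ordn_Dv: "ordn (Suc n) F \<Longrightarrow> ordn n (Dv F)"
  by (simp add: ordn_def del: of_nat_Suc of_nat_add)

lemma mult_nth2: "(F * G) $ k $ l = (\<Sum>i=0..k. \<Sum>j=0..l. F $ i $ j * G $ (k - i) $ (l - j))"
  by (simp add: fps_mult_nth fps_sum_nth)

lemma ordn_mult: "ordn a F \<Longrightarrow> ordn b G \<Longrightarrow> ordn (a + b) (F * G)"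
  unfolding ordn_def mult_nth2
proof (intro allI impI sum.neutral ballI)
  fix k l i j
  assume F: "\<forall>k l. k + l < a \<longrightarrow> F $ k $ l = 0" and G: "\<forall>k l. k + l < b \<longrightarrow> G $ k $ l = 0"
    and kl: "k + l < a + b" and i: "i \<in> {0..k}" and j: "j \<in> {0..l}"
  show "F $ i $ j * G $ (k - i) $ (l - j) = 0"
  proof (cases "i + j < a")
    case True then show ?thesis using F by simp
  next
    case False
    then have "k - i + (l - j) < b" using kl i j by auto
    then show ?thesis using G by simp
  qed
qed

lemma ordn_mult': "ordn a F \<Longrightarrow> ordn b G \<Longrightarrow> c \<le> a + b \<Longrightarrow> ordn c (F * G)"
  using ordn_mult ordn_mono by blast

lemma ordn_U[simp]: "ordn 1 U" by (simp add: ordn_def)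
lemma ordn_V[simp]: "ordn 1 V" by (simp add: ordn_def)

lemma ordn_power: "ordn a F \<Longrightarrow> ordn (a * j) (F ^ j)"
  by (induction j) (simp_all add: ordn_mult)

lemma ordn_sum: "(\<And>j. j \<in> J \<Longrightarrow> ordn n (f j)) \<Longrightarrow> ordn n (sum f J)"
proof (induction J rule: infinite_finite_induct)
  case (insert x F) then show ?case by (simp add: ordn_add)
qed simp_all

lemma ordn_multL: "ordn n F \<Longrightarrow> ordn n (C * F)"
  using ordn_mult[of 0 C n F] by simp
lemma ordn_multR: "ordn n F \<Longrightarrow> ordn n (F * C)"
  using ordn_mult[of n F 0 C] by simp

lemma pow_diff_ord:
  assumes "ordn 1 Y" "ordn 1 Y'" "ordn a (Y' - Y)" "j \<ge> 1"
  shows "ordn (a + j - 1) (Y' ^ j - Y ^ j)"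
  using assms(4)
proof (induction j rule: dec_induct)
  case base then show ?case using assms by simp
next
  case (step j)
  have eq: "Y' ^ Suc j - Y ^ Suc j = Y' * (Y' ^ j - Y ^ j) + (Y' - Y) * Y ^ j"
    by (simp add: algebra_simps)
  have 1: "ordn (1 + (a + j - 1)) (Y' * (Y' ^ j - Y ^ j))"
    by (rule ordn_mult[OF assms(2) step.IH])
  have 2: "ordn (a + 1 * j) ((Y' - Y) * Y ^ j)"
    by (rule ordn_mult[OF assms(3) ordn_power[OF assms(1)]])
  show ?case unfolding eq
    by (rule ordn_add; rule ordn_mono[OF 1] ordn_mono[OF 2]) (use step.hyps in auto)
qed

lemma sum_nth2: "(sum f J :: R) $ k $ l = (\<Sum>j\<in>J. f j $ k $ l)"
  by (simp add: fps_sum_nth)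

lemma prod_pert:
  fixes A B A0 B0 dA dB :: R
  assumes "ordn p (A - A0)" "ordn q (B - B0)" "ordn r dA" "ordn s dB"
    "n \<le> p + s" "n \<le> q + r" "n \<le> r + s"
  shows "ordn n ((A + dA) * (B + dB) - A * B - (A0 * dB + B0 * dA))"
proof -
  have eq: "(A + dA) * (B + dB) - A * B - (A0 * dB + B0 * dA) = (A - A0) * dB + (B - B0) * dA + dA * dB"
    by (simp add: algebra_simps)
  have 1: "ordn n ((A - A0) * dB)" by (rule ordn_mult'[OF assms(1) assms(4)]) (use assms in simp)
  have 2: "ordn n ((B - B0) * dA)" by (rule ordn_mult'[OF assms(2) assms(3)]) (use assms in simp)
  have 3: "ordn n (dA * dB)" by (rule ordn_mult'[OF assms(3) assms(4)]) (use assms in simp)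
  show ?thesis unfolding eq using 1 2 3 by (intro ordn_add)
qed

definition Z2 :: "real \<Rightarrow> real \<Rightarrow> real \<Rightarrow> R" where
  "Z2 a20 a11 a02 = sc (a20/2) * U * U + sc a11 * U * V + sc (a02/2) * V * V"

lemma sc_half: "sc (a/2) * F + sc (a/2) * F = sc a * F"
  by (simp add: sc_add flip: distrib_right)

lemma sc_two: "2 * sc (a/2) = sc a"
  by (simp add: mult_2 sc_add)

lemma Du_Z2: "Du (Z2 a20 a11 a02) = sc a20 * U + sc a11 * V"
  by (simp add: Z2_def algebra_simps sc_two)
lemma Dv_Z2: "Dv (Z2 a20 a11 a02) = sc a11 * U + sc a02 * V"
proof -
  have "Dv (Z2 a20 a11 a02) = sc a11 * U + (sc (a02/2) * V + sc (a02/2) * V)"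
    by (simp add: Z2_def algebra_simps)
  then show ?thesis by (simp add: sc_half)
qed

definition beta :: "(nat \<Rightarrow> real) \<Rightarrow> nat \<Rightarrow> R \<Rightarrow> R" where
  "beta b m Y = (\<Sum>j\<in>{3..m+1}. sc (b j / fact j) * Y ^ j)"

lemma Phi_beta: "Phi (beta_comp b m Y) = beta b m (Phi Y)"
proof (intro fps_ext)
  fix k l
  show "Phi (beta_comp b m Y) $ k $ l = beta b m (Phi Y) $ k $ l"
    unfolding Phi_nth beta_comp_def beta_def sum_nth2 sc_mult_nth sum_divide_distrib
    by (intro sum.cong refl) (simp add: Phi_pow[symmetric])
qed

lemma ordn_beta: "ordn 1 Y \<Longrightarrow> ordn 3 (beta b m Y)"
  unfolding beta_def
  by (intro ordn_sum ordn_multL, rule ordn_mono[OF ordn_power[of 1 Y]]) auto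

lemma ordn_beta_diff:
  assumes "ordn 1 Y" "ordn 1 Y'" "ordn a (Y' - Y)" "a \<ge> 2"
  shows "ordn (a + 2) (beta b m Y' - beta b m Y)"
proof -
  have eq: "beta b m Y' - beta b m Y = (\<Sum>j\<in>{3..m+1}. sc (b j / fact j) * (Y' ^ j - Y ^ j))"
    unfolding beta_def by (simp add: sum_subtractf right_diff_distrib)
  show ?thesis unfolding eq
    by (intro ordn_sum ordn_multL, rule ordn_mono[OF pow_diff_ord[OF assms(1-3)]]) auto
qed

definition ff2 :: "(nat \<Rightarrow> real) \<Rightarrow> nat \<Rightarrow> R \<Rightarrow> R \<Rightarrow> R" where
  "ff2 b m X Y = X * Y + beta b m Y"

definition eE where "eE b m EE X Y Z = EE - (Du X * Du X + Du (ff2 b m X Y) * Du (ff2 b m X Y) + Du Z * Du Z)"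
definition eF where "eF b m FF X Y Z = FF - (Du X * Dv X + Du (ff2 b m X Y) * Dv (ff2 b m X Y) + Du Z * Dv Z)"
definition eG where "eG b m GG X Y Z = GG - (Dv X * Dv X + Dv (ff2 b m X Y) * Dv (ff2 b m X Y) + Dv Z * Dv Z)"

lemma ordn_Du': "ordn n F \<Longrightarrow> ordn (n - 1) (Du F)"
  by (cases n) (simp_all add: ordn_Du)
lemma ordn_Dv': "ordn n F \<Longrightarrow> ordn (n - 1) (Dv F)"
  by (cases n) (simp_all add: ordn_Dv)

lemma pert:
  fixes X Y Z xi eta zeta :: R
  assumes X: "ordn 3 (X - U)" and Y: "ordn 2 (Y - V)" and Z: "ordn 3 (Z - Z2 a20 a11 a02)"
    and n: "n \<ge> 3" and xi: "ordn (n+1) xi" and eta: "ordn (n-1) eta" and zeta: "ordn n zeta"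
  shows "ordn (n+1) (eE b m EE (X+xi) (Y+eta) (Z+zeta) - (eE b m EE X Y Z -
            2 * (Du xi + V * Du (U * eta) + Du (Z2 a20 a11 a02) * Du zeta)))"
    and "ordn (n+1) (eF b m FF (X+xi) (Y+eta) (Z+zeta) - (eF b m FF X Y Z -
            (Dv xi + V * Dv (U * eta) + U * Du (U * eta) + Du (Z2 a20 a11 a02) * Dv zeta
              + Dv (Z2 a20 a11 a02) * Du zeta)))"
    and "ordn (n+1) (eG b m GG (X+xi) (Y+eta) (Z+zeta) - (eG b m GG X Y Z -
            2 * (U * Dv (U * eta) + Dv (Z2 a20 a11 a02) * Dv zeta)))"
proof -
  define Z0 where "Z0 = Z2 a20 a11 a02"
  define f where "f = ff2 b m X Y"
  define f' where "f' = ff2 b m (X+xi) (Y+eta)"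
  define rho where "rho = f' - f - U * eta"
  have Y1: "ordn 1 Y"
  proof -
    have "ordn 1 ((Y - V) + V)" by (rule ordn_add[OF ordn_mono[OF Y] ordn_V]) simp
    then show ?thesis by simp
  qed
  have eta1: "ordn 1 eta" by (rule ordn_mono[OF eta]) (use n in simp)
  have Y'1: "ordn 1 (Y + eta)" using Y1 eta1 by (rule ordn_add)
  have rho: "ordn (n+1) rho"
  proof -
    have eq: "rho = xi * Y + (X - U) * eta + xi * eta + (beta b m (Y + eta) - beta b m Y)"
      by (simp add: rho_def f'_def f_def ff2_def algebra_simps)
    have bd: "ordn (n - 1 + 2) (beta b m (Y + eta) - beta b m Y)"
      by (rule ordn_beta_diff[OF Y1 Y'1]) (use eta n in simp_all)
    show ?thesis unfolding eq
      apply (intro ordn_add)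
         apply (rule ordn_mult'[OF xi Y1]; simp)
        apply (rule ordn_mult'[OF X eta]; use n in simp)
       apply (rule ordn_mult'[OF xi eta]; use n in simp)
      using bd n by (simp add: numeral_eq_Suc)
  qed
  have f'eq: "f' = f + U * eta + rho" by (simp add: rho_def)
  have f3: "ordn 3 (f - U * V)"
  proof -
    have eq: "f - U * V = (X - U) * Y + U * (Y - V) + beta b m Y"
      by (simp add: f_def ff2_def algebra_simps)
    show ?thesis unfolding eq
      by (intro ordn_add ordn_mult'[OF X Y1] ordn_mult'[OF ordn_U Y] ordn_beta[OF Y1]) simp_all
  qed
  have fu: "ordn 2 (Du f - V)" using ordn_Du'[OF f3] by simp
  have fv: "ordn 2 (Dv f - U)" using ordn_Dv'[OF f3] by simp
  have Ueta: "ordn n (U * eta)" using ordn_mult[OF ordn_U eta] n by simp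
  define dAu where "dAu = Du (U * eta) + Du rho"
  define dAv where "dAv = Dv (U * eta) + Dv rho"
  have dAu: "ordn (n-1) dAu" unfolding dAu_def
    using ordn_Du'[OF Ueta] ordn_Du'[OF rho] by (intro ordn_add) (auto intro: ordn_mono)
  have dAv: "ordn (n-1) dAv" unfolding dAv_def
    using ordn_Dv'[OF Ueta] ordn_Dv'[OF rho] by (intro ordn_add) (auto intro: ordn_mono)
  have Duf': "Du f' = Du f + dAu" by (simp add: f'eq dAu_def)
  have Dvf': "Dv f' = Dv f + dAv" by (simp add: f'eq dAv_def)
  have Xu: "ordn 2 (Du X - 1)" using ordn_Du'[OF X] by simp
  have Xv: "ordn 2 (Dv X - 0)" using ordn_Dv'[OF X] by simp
  have Zu: "ordn 2 (Du Z - Du Z0)" using ordn_Du'[OF Z] by (simp add: Z0_def)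
  have Zv: "ordn 2 (Dv Z - Dv Z0)" using ordn_Dv'[OF Z] by (simp add: Z0_def)
  have xiu: "ordn n (Du xi)" using ordn_Du'[OF xi] by simp
  have xiv: "ordn n (Dv xi)" using ordn_Dv'[OF xi] by simp
  have zu: "ordn (n-1) (Du zeta)" using ordn_Du'[OF zeta] .
  have zv: "ordn (n-1) (Dv zeta)" using ordn_Dv'[OF zeta] .
  have rhou: "ordn (n+1) (V * Du rho)" using ordn_mult[OF ordn_V ordn_Du'[OF rho]] by simp
  have rhov: "ordn (n+1) (V * Dv rho)" using ordn_mult[OF ordn_V ordn_Dv'[OF rho]] by simp
  have rhou': "ordn (n+1) (U * Du rho)" using ordn_mult[OF ordn_U ordn_Du'[OF rho]] by simp
  have rhov': "ordn (n+1) (U * Dv rho)" using ordn_mult[OF ordn_U ordn_Dv'[OF rho]] by simp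
  have PXuu: "ordn (n+1) ((Du X + Du xi) * (Du X + Du xi) - Du X * Du X - (1 * Du xi + 1 * Du xi))"
    by (rule prod_pert[OF Xu Xu xiu xiu]) (use n in auto)
  have PXuv: "ordn (n+1) ((Du X + Du xi) * (Dv X + Dv xi) - Du X * Dv X - (1 * Dv xi + 0 * Du xi))"
    by (rule prod_pert[OF Xu Xv xiu xiv]) (use n in auto)
  have PXvv: "ordn (n+1) ((Dv X + Dv xi) * (Dv X + Dv xi) - Dv X * Dv X - (0 * Dv xi + 0 * Dv xi))"
    by (rule prod_pert[OF Xv Xv xiv xiv]) (use n in auto)
  have Pfuu: "ordn (n+1) ((Du f + dAu) * (Du f + dAu) - Du f * Du f - (V * dAu + V * dAu))"
    by (rule prod_pert[OF fu fu dAu dAu]) (use n in auto)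
  have Pfuv: "ordn (n+1) ((Du f + dAu) * (Dv f + dAv) - Du f * Dv f - (V * dAv + U * dAu))"
    by (rule prod_pert[OF fu fv dAu dAv]) (use n in auto)
  have Pfvv: "ordn (n+1) ((Dv f + dAv) * (Dv f + dAv) - Dv f * Dv f - (U * dAv + U * dAv))"
    by (rule prod_pert[OF fv fv dAv dAv]) (use n in auto)
  have PZuu: "ordn (n+1) ((Du Z + Du zeta) * (Du Z + Du zeta) - Du Z * Du Z - (Du Z0 * Du zeta + Du Z0 * Du zeta))"
    by (rule prod_pert[OF Zu Zu zu zu]) (use n in auto)
  have PZuv: "ordn (n+1) ((Du Z + Du zeta) * (Dv Z + Dv zeta) - Du Z * Dv Z - (Du Z0 * Dv zeta + Dv Z0 * Du zeta))"
    by (rule prod_pert[OF Zu Zv zu zv]) (use n in auto)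
  have PZvv: "ordn (n+1) ((Dv Z + Dv zeta) * (Dv Z + Dv zeta) - Dv Z * Dv Z - (Dv Z0 * Dv zeta + Dv Z0 * Dv zeta))"
    by (rule prod_pert[OF Zv Zv zv zv]) (use n in auto)
  show "ordn (n+1) (eE b m EE (X+xi) (Y+eta) (Z+zeta) - (eE b m EE X Y Z -
            2 * (Du xi + V * Du (U * eta) + Du (Z2 a20 a11 a02) * Du zeta)))"
  proof -
    have eq: "eE b m EE (X+xi) (Y+eta) (Z+zeta) - (eE b m EE X Y Z -
            2 * (Du xi + V * Du (U * eta) + Du (Z2 a20 a11 a02) * Du zeta)) =
       - (((Du X + Du xi) * (Du X + Du xi) - Du X * Du X - (1 * Du xi + 1 * Du xi))
        + ((Du f + dAu) * (Du f + dAu) - Du f * Du f - (V * dAu + V * dAu))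
        + ((Du Z + Du zeta) * (Du Z + Du zeta) - Du Z * Du Z - (Du Z0 * Du zeta + Du Z0 * Du zeta)))
       - 2 * (V * Du rho)"
      unfolding eE_def f'_def[symmetric] f_def[symmetric] Duf' Z0_def[symmetric]
      by (simp add: dAu_def algebra_simps)
    show ?thesis unfolding eq
      by (intro ordn_diff ordn_minus ordn_add ordn_multL PXuu Pfuu PZuu rhou)
  qed
  show "ordn (n+1) (eF b m FF (X+xi) (Y+eta) (Z+zeta) - (eF b m FF X Y Z -
            (Dv xi + V * Dv (U * eta) + U * Du (U * eta) + Du (Z2 a20 a11 a02) * Dv zeta
              + Dv (Z2 a20 a11 a02) * Du zeta)))"
  proof -
    have eq: "eF b m FF (X+xi) (Y+eta) (Z+zeta) - (eF b m FF X Y Z -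
            (Dv xi + V * Dv (U * eta) + U * Du (U * eta) + Du (Z2 a20 a11 a02) * Dv zeta
              + Dv (Z2 a20 a11 a02) * Du zeta)) =
       - (((Du X + Du xi) * (Dv X + Dv xi) - Du X * Dv X - (1 * Dv xi + 0 * Du xi))
        + ((Du f + dAu) * (Dv f + dAv) - Du f * Dv f - (V * dAv + U * dAu))
        + ((Du Z + Du zeta) * (Dv Z + Dv zeta) - Du Z * Dv Z - (Du Z0 * Dv zeta + Dv Z0 * Du zeta)))
       - (V * Dv rho) - (U * Du rho)"
      unfolding eF_def f'_def[symmetric] f_def[symmetric] Duf' Dvf' Z0_def[symmetric]
      by (simp add: dAu_def dAv_def algebra_simps)
    show ?thesis unfolding eq
      by (intro ordn_diff ordn_minus ordn_add ordn_multL PXuv Pfuv PZuv rhov rhou')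
  qed
  show "ordn (n+1) (eG b m GG (X+xi) (Y+eta) (Z+zeta) - (eG b m GG X Y Z -
            2 * (U * Dv (U * eta) + Dv (Z2 a20 a11 a02) * Dv zeta)))"
  proof -
    have eq: "eG b m GG (X+xi) (Y+eta) (Z+zeta) - (eG b m GG X Y Z -
            2 * (U * Dv (U * eta) + Dv (Z2 a20 a11 a02) * Dv zeta)) =
       - (((Dv X + Dv xi) * (Dv X + Dv xi) - Dv X * Dv X - (0 * Dv xi + 0 * Dv xi))
        + ((Dv f + dAv) * (Dv f + dAv) - Dv f * Dv f - (U * dAv + U * dAv))
        + ((Dv Z + Dv zeta) * (Dv Z + Dv zeta) - Dv Z * Dv Z - (Dv Z0 * Dv zeta + Dv Z0 * Dv zeta)))
       - 2 * (U * Dv rho)"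
      unfolding eG_def f'_def[symmetric] f_def[symmetric] Dvf' Z0_def[symmetric]
      by (simp add: dAv_def algebra_simps)
    show ?thesis unfolding eq
      by (intro ordn_diff ordn_minus ordn_add ordn_multL PXvv Pfvv PZvv rhov')
  qed
qed

lemma sc_numeral: "sc (numeral w) = numeral w"
  by (simp add: sc_def numeral_fps_const)

lemma numeral_mult_nth[simp]: "((numeral w :: R) * F) $ k $ l = numeral w * F $ k $ l"
  by (simp flip: sc_numeral)

definition LE :: "real \<Rightarrow> real \<Rightarrow> real \<Rightarrow> R \<Rightarrow> R \<Rightarrow> R \<Rightarrow> R" where
  "LE a20 a11 a02 xi eta zeta = 2 * (Du xi + V * Du (U * eta) + Du (Z2 a20 a11 a02) * Du zeta)"
definition LF :: "real \<Rightarrow> real \<Rightarrow> real \<Rightarrow> R \<Rightarrow> R \<Rightarrow> R \<Rightarrow> R" where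
  "LF a20 a11 a02 xi eta zeta = Dv xi + V * Dv (U * eta) + U * Du (U * eta) + Du (Z2 a20 a11 a02) * Dv zeta
              + Dv (Z2 a20 a11 a02) * Du zeta"
definition LG :: "real \<Rightarrow> real \<Rightarrow> real \<Rightarrow> R \<Rightarrow> R \<Rightarrow> R \<Rightarrow> R" where
  "LG a20 a11 a02 xi eta zeta = 2 * (U * Dv (U * eta) + Dv (Z2 a20 a11 a02) * Dv zeta)"

definition xs :: "R \<Rightarrow> nat \<Rightarrow> nat \<Rightarrow> real" where "xs F n l = F $ (n + 1 - l) $ l"
definition ys :: "R \<Rightarrow> nat \<Rightarrow> nat \<Rightarrow> real" where "ys F n l = (if l < n then F $ (n - 1 - l) $ l else 0)"
definition zs :: "R \<Rightarrow> nat \<Rightarrow> nat \<Rightarrow> real" where "zs F n l = (if l \<le> n then F $ (n - l) $ l else 0)"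

lemma U_mult_nth1: "(U * F) $ k = (if k = 0 then 0 else F $ (k - 1))"
  by (cases k) (simp_all add: U_def)
lemma V_mult_nth1: "(V * F) $ k = fps_X * F $ k"
  by (simp add: V_def)
lemma sc_mult_nth1: "(sc c * F) $ k = fps_const c * F $ k"
  by (simp add: sc_def)
lemma numeral_mult_nth1: "((numeral w :: R) * F) $ k = numeral w * F $ k"
  by (simp add: numeral_fps_const)
lemma numeral_mult_nth0: "((numeral w :: real fps) * f) $ k = numeral w * f $ k"
  by (simp add: numeral_fps_const)

lemma nth_if: "(if P then f else g) $ n = (if P then f $ n else g $ n)" by simp

lemmas nthsimps = nth_if fps_zero_nth U_mult_nth1 V_mult_nth1 sc_mult_nth1 numeral_mult_nth1 numeral_mult_nth0 Dv_nth1
  fps_add_nth fps_X_mult_nth fps_mult_left_const_nth fps_deriv_nth ofnat_nth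





lemma LE_nth: "LE a20 a11 a02 xi eta zeta $ k $ l =
   2 * sysE (k+l) a20 a11 (xs xi (k+l)) (ys eta (k+l)) (zs zeta (k+l)) l"
proof -
  have eq: "LE a20 a11 a02 xi eta zeta = 2 * (Du xi + V * Du (U * eta) + sc a20 * (U * Du zeta) + sc a11 * (V * Du zeta))"
    by (simp add: LE_def Du_Z2 algebra_simps)
  show ?thesis unfolding eq sysE_def xs_def ys_def zs_def
    apply (simp only: nthsimps)
    apply (cases l; cases k)
    apply (simp_all add: algebra_simps)
    done
qed

lemma LF_nth: "LF a20 a11 a02 xi eta zeta $ k $ l =
   sysF (k+l) a20 a11 a02 (xs xi (k+l)) (ys eta (k+l)) (zs zeta (k+l)) l"
proof -
  have eq: "LF a20 a11 a02 xi eta zeta = Dv xi + V * Dv (U * eta) + U * Du (U * eta) + sc a20 * (U * Dv zeta)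
     + sc a11 * (V * Dv zeta) + sc a11 * (U * Du zeta) + sc a02 * (V * Du zeta)"
    by (simp add: LF_def Du_Z2 Dv_Z2 algebra_simps)
  show ?thesis unfolding eq sysF_def xs_def ys_def zs_def
    apply (simp only: nthsimps)
    apply (cases l; cases k)
    apply (simp_all add: algebra_simps)
    done
qed

lemma LG_nth: "LG a20 a11 a02 xi eta zeta $ k $ l =
   2 * sysG a11 a02 (ys eta (k+l)) (zs zeta (k+l)) l"
proof -
  have eq: "LG a20 a11 a02 xi eta zeta = 2 * (U * Dv (U * eta) + sc a11 * (U * Dv zeta) + sc a02 * (V * Dv zeta))"
    by (simp add: LG_def Dv_Z2 algebra_simps)
  show ?thesis unfolding eq sysG_def xs_def ys_def zs_def
    apply (simp only: nthsimps)
    apply (cases l; cases k)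
    apply (simp_all add: algebra_simps)
    done
qed

lemma ordn_Suc_iff: "ordn (Suc n) F \<longleftrightarrow> ordn n F \<and> (\<forall>l\<le>n. F $ (n - l) $ l = 0)"
proof
  assume "ordn (Suc n) F" then show "ordn n F \<and> (\<forall>l\<le>n. F $ (n - l) $ l = 0)"
    by (auto simp: ordn_def)
next
  assume a: "ordn n F \<and> (\<forall>l\<le>n. F $ (n - l) $ l = 0)"
  show "ordn (Suc n) F" unfolding ordn_def
  proof (intro allI impI)
    fix k l assume "k + l < Suc n"
    then consider "k + l < n" | "k + l = n" by linarith
    then show "F $ k $ l = 0"
    proof cases
      case 1 then show ?thesis using a by (simp add: ordn_def)
    next
      case 2 then have "k = n - l" "l \<le> n" by auto
      then show ?thesis using a by simp
    qed
  qed
qed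

lemma L_ord:
  assumes n: "n \<ge> 1" and xi: "ordn (n+1) xi" and eta: "ordn (n-1) eta" and zeta: "ordn n zeta"
  shows "ordn n (LE a20 a11 a02 xi eta zeta)" "ordn n (LF a20 a11 a02 xi eta zeta)"
    "ordn n (LG a20 a11 a02 xi eta zeta)"
proof -
  have Z2u: "ordn 1 (Du (Z2 a20 a11 a02))" unfolding Du_Z2
    by (intro ordn_add ordn_sc ordn_U ordn_V)
  have Z2v: "ordn 1 (Dv (Z2 a20 a11 a02))" unfolding Dv_Z2
    by (intro ordn_add ordn_sc ordn_U ordn_V)
  have Ueta: "ordn n (U * eta)" using ordn_mult[OF ordn_U eta] n by simp
  have xu: "ordn n (Du xi)" using ordn_Du'[OF xi] by simp
  have xv: "ordn n (Dv xi)" using ordn_Dv'[OF xi] by simp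
  have eu: "ordn n (V * Du (U * eta))" using ordn_mult[OF ordn_V ordn_Du'[OF Ueta]] n by simp
  have ev: "ordn n (V * Dv (U * eta))" using ordn_mult[OF ordn_V ordn_Dv'[OF Ueta]] n by simp
  have eu': "ordn n (U * Du (U * eta))" using ordn_mult[OF ordn_U ordn_Du'[OF Ueta]] n by simp
  have ev': "ordn n (U * Dv (U * eta))" using ordn_mult[OF ordn_U ordn_Dv'[OF Ueta]] n by simp
  have zuu: "ordn n (Du (Z2 a20 a11 a02) * Du zeta)" using ordn_mult[OF Z2u ordn_Du'[OF zeta]] n by simp
  have zuv: "ordn n (Du (Z2 a20 a11 a02) * Dv zeta)" using ordn_mult[OF Z2u ordn_Dv'[OF zeta]] n by simp
  have zvu: "ordn n (Dv (Z2 a20 a11 a02) * Du zeta)" using ordn_mult[OF Z2v ordn_Du'[OF zeta]] n by simp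
  have zvv: "ordn n (Dv (Z2 a20 a11 a02) * Dv zeta)" using ordn_mult[OF Z2v ordn_Dv'[OF zeta]] n by simp
  show "ordn n (LE a20 a11 a02 xi eta zeta)" unfolding LE_def
    by (intro ordn_multL ordn_add xu eu zuu)
  show "ordn n (LF a20 a11 a02 xi eta zeta)" unfolding LF_def
    by (intro ordn_add xv ev eu' zuv zvu)
  show "ordn n (LG a20 a11 a02 xi eta zeta)" unfolding LG_def
    by (intro ordn_multL ordn_add ev' zvv)
qed

lemma lin_unique:
  assumes a02: "a02 > 0" and n: "n \<ge> 2"
    and xi: "ordn (n+1) xi" and eta: "ordn (n-1) eta" and zeta: "ordn n zeta"
    and LE: "ordn (n+1) (LE a20 a11 a02 xi eta zeta)" and LF: "ordn (n+1) (LF a20 a11 a02 xi eta zeta)"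
    and LG: "ordn (n+1) (LG a20 a11 a02 xi eta zeta)"
  shows "ordn (n+2) xi \<and> ordn n eta \<and> ordn (n+1) zeta"
proof -
  have E: "\<forall>l\<le>n. sysE n a20 a11 (xs xi n) (ys eta n) (zs zeta n) l = 0"
  proof (intro allI impI)
    fix l assume l: "l \<le> n"
    have "LE a20 a11 a02 xi eta zeta $ (n - l) $ l = 0" using LE l by (simp add: ordn_def)
    then show "sysE n a20 a11 (xs xi n) (ys eta n) (zs zeta n) l = 0" using l by (simp add: LE_nth)
  qed
  have F: "\<forall>l\<le>n. sysF n a20 a11 a02 (xs xi n) (ys eta n) (zs zeta n) l = 0"
  proof (intro allI impI)
    fix l assume l: "l \<le> n"
    have "LF a20 a11 a02 xi eta zeta $ (n - l) $ l = 0" using LF l by (simp add: ordn_def)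
    then show "sysF n a20 a11 a02 (xs xi n) (ys eta n) (zs zeta n) l = 0" using l by (simp add: LF_nth)
  qed
  have G: "\<forall>l\<le>n. sysG a11 a02 (ys eta n) (zs zeta n) l = 0"
  proof (intro allI impI)
    fix l assume l: "l \<le> n"
    have "LG a20 a11 a02 xi eta zeta $ (n - l) $ l = 0" using LG l by (simp add: ordn_def)
    then show "sysG a11 a02 (ys eta n) (zs zeta n) l = 0" using l by (simp add: LG_nth)
  qed
  have z0: "\<forall>l>n. zs zeta n l = 0" by (simp add: zs_def)
  have y0: "\<forall>l\<ge>n. ys eta n l = 0" by (simp add: ys_def)
  have sol: "(\<forall>l\<le>n+1. xs xi n l = 0) \<and> (\<forall>l. ys eta n l = 0) \<and> (\<forall>l. zs zeta n l = 0)"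
    by (rule sys_unique[OF a02 n z0 y0 E F G])
  have "ordn (Suc (n+1)) xi" unfolding ordn_Suc_iff
    using xi sol by (simp add: xs_def)
  moreover have "ordn (Suc (n-1)) eta" unfolding ordn_Suc_iff
  proof (intro conjI allI impI)
    fix l assume l: "l \<le> n - 1"
    then have "l < n" using n by simp
    then have "ys eta n l = 0" using sol by blast
    then show "eta $ (n - 1 - l) $ l = 0" using \<open>l < n\<close> by (simp add: ys_def)
  qed (rule eta)
  moreover have "ordn (Suc n) zeta" unfolding ordn_Suc_iff
  proof (intro conjI allI impI)
    fix l assume l: "l \<le> n"
    have "zs zeta n l = 0" using sol by blast
    then show "zeta $ (n - l) $ l = 0" using l by (simp add: zs_def)
  qed (rule zeta)
  ultimately show ?thesis using n by simp
qed

definition deg_le :: "nat \<Rightarrow> R \<Rightarrow> bool" where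
  "deg_le d F \<longleftrightarrow> (\<forall>k l. d < k + l \<longrightarrow> F $ k $ l = 0)"

definition homog :: "nat \<Rightarrow> (nat \<Rightarrow> real) \<Rightarrow> R" where
  "homog d x = Abs_fps (\<lambda>k. Abs_fps (\<lambda>l. if k + l = d then x l else 0))"

lemma homog_nth[simp]: "homog d x $ k $ l = (if k + l = d then x l else 0)"
  by (simp add: homog_def)

lemma homog_ord: "ordn d (homog d x)" by (simp add: ordn_def)
lemma homog_deg: "deg_le d (homog d x)" by (simp add: deg_le_def)

lemma lin_exists:
  assumes a02: "a02 > 0" and n: "n \<ge> 2"
    and RE: "ordn n RE" and RF: "ordn n RF" and RG: "ordn n RG"
  shows "\<exists>xi eta zeta. ordn (n+1) xi \<and> deg_le (n+1) xi \<and> ordn (n-1) eta \<and> deg_le (n-1) eta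
     \<and> ordn n zeta \<and> deg_le n zeta \<and>
     ordn (n+1) (LE a20 a11 a02 xi eta zeta - RE) \<and> ordn (n+1) (LF a20 a11 a02 xi eta zeta - RF) \<and>
     ordn (n+1) (LG a20 a11 a02 xi eta zeta - RG)"
proof -
  obtain x y z where z0: "\<forall>l>n. z l = 0" and y0: "\<forall>l\<ge>n. y l = 0" and
    sol: "\<forall>l\<le>n. sysE n a20 a11 x y z l = RE $ (n-l) $ l / 2 \<and> sysF n a20 a11 a02 x y z l = RF $ (n-l) $ l
       \<and> sysG a11 a02 y z l = RG $ (n-l) $ l / 2"
    using sys_exists[OF a02 n, of a20 a11 "\<lambda>l. RE $ (n-l) $ l / 2" "\<lambda>l. RF $ (n-l) $ l" "\<lambda>l. RG $ (n-l) $ l / 2"]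
    by blast
  define xi where "xi = homog (n+1) x"
  define eta where "eta = homog (n-1) y"
  define zeta where "zeta = homog n z"
  have ys: "ys eta n = y" using y0 n by (auto simp: ys_def eta_def fun_eq_iff)
  have zs: "zs zeta n = z" using z0 by (auto simp: zs_def zeta_def fun_eq_iff)
  have xs: "xs xi n l = x l" if "l \<le> n + 1" for l using that by (simp add: xs_def xi_def)
  have sE: "sysE n a20 a11 (xs xi n) y z l = sysE n a20 a11 x y z l" if "l \<le> n" for l
    using that by (simp add: sysE_def xs)
  have sF: "sysF n a20 a11 a02 (xs xi n) y z l = sysF n a20 a11 a02 x y z l" if "l \<le> n" for l
    using that by (simp add: sysF_def xs)
  have xio: "ordn (n+1) xi" unfolding xi_def by (rule homog_ord)
  have etao: "ordn (n-1) eta" unfolding eta_def by (rule homog_ord)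
  have zetao: "ordn n zeta" unfolding zeta_def by (rule homog_ord)
  have n1: "n \<ge> 1" using n by simp
  note Lo = L_ord[OF n1 xio etao zetao, of a20 a11 a02]
  have "ordn (Suc n) (LE a20 a11 a02 xi eta zeta - RE)" unfolding ordn_Suc_iff
  proof (intro conjI allI impI)
    show "ordn n (LE a20 a11 a02 xi eta zeta - RE)" by (rule ordn_diff[OF Lo(1) RE])
    fix l assume l: "l \<le> n"
    show "(LE a20 a11 a02 xi eta zeta - RE) $ (n - l) $ l = 0"
      using l sol sE[OF l] by (simp add: LE_nth ys zs mult.commute)
  qed
  moreover have "ordn (Suc n) (LF a20 a11 a02 xi eta zeta - RF)" unfolding ordn_Suc_iff
  proof (intro conjI allI impI)
    show "ordn n (LF a20 a11 a02 xi eta zeta - RF)" by (rule ordn_diff[OF Lo(2) RF])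
    fix l assume l: "l \<le> n"
    show "(LF a20 a11 a02 xi eta zeta - RF) $ (n - l) $ l = 0"
      using l sol sF[OF l] by (simp add: LF_nth ys zs)
  qed
  moreover have "ordn (Suc n) (LG a20 a11 a02 xi eta zeta - RG)" unfolding ordn_Suc_iff
  proof (intro conjI allI impI)
    show "ordn n (LG a20 a11 a02 xi eta zeta - RG)" by (rule ordn_diff[OF Lo(3) RG])
    fix l assume l: "l \<le> n"
    show "(LG a20 a11 a02 xi eta zeta - RG) $ (n - l) $ l = 0"
      using l sol by (simp add: LG_nth ys zs mult.commute)
  qed
  ultimately show ?thesis using xio etao zetao
    by (intro exI[of _ xi] exI[of _ eta] exI[of _ zeta]) (simp add: xi_def eta_def zeta_def homog_deg)
qed

lemma mult_00: "(F * G :: R) $ 0 $ 0 = F$0$0 * G$0$0" by simp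
lemma mult_10: "(F * G :: R) $ 1 $ 0 = F$0$0 * G$1$0 + F$1$0 * G$0$0" by simp
lemma mult_01: "(F * G :: R) $ 0 $ 1 = F$0$0 * G$0$1 + F$0$1 * G$0$0" by simp
lemma mult_20: "(F * G :: R) $ 2 $ 0 = F$0$0 * G$2$0 + F$1$0 * G$1$0 + F$2$0 * G$0$0"
  by (simp add: fps_mult_nth numeral_2_eq_2)
lemma mult_11: "(F * G :: R) $ 1 $ 1 = F$0$0 * G$1$1 + F$1$0 * G$0$1 + F$0$1 * G$1$0 + F$1$1 * G$0$0"
  by (simp add: fps_mult_nth)
lemma mult_02: "(F * G :: R) $ 0 $ 2 = F$0$0 * G$0$2 + F$0$1 * G$0$1 + F$0$2 * G$0$0"
  by (simp add: fps_mult_nth numeral_2_eq_2)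

lemma enum4: "k + l < (4::nat) \<Longrightarrow> (k = 0 \<and> l = 0) \<or> (k = 1 \<and> l = 0) \<or> (k = 0 \<and> l = 1) \<or>
  (k = 2 \<and> l = 0) \<or> (k = 1 \<and> l = 1) \<or> (k = 0 \<and> l = 2) \<or>
  (k = 3 \<and> l = 0) \<or> (k = 2 \<and> l = 1) \<or> (k = 1 \<and> l = 2) \<or> (k = 0 \<and> l = 3)"
  by presburger
lemma enum3: "k + l < (3::nat) \<Longrightarrow> (k = 0 \<and> l = 0) \<or> (k = 1 \<and> l = 0) \<or> (k = 0 \<and> l = 1) \<or>
  (k = 2 \<and> l = 0) \<or> (k = 1 \<and> l = 1) \<or> (k = 0 \<and> l = 2)"
  by presburger
lemma enum2: "k + l < (2::nat) \<Longrightarrow> (k = 0 \<and> l = 0) \<or> (k = 1 \<and> l = 0) \<or> (k = 0 \<and> l = 1)"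
  by presburger

lemma ordnE3: "ordn 3 F \<Longrightarrow> F$0$0 = 0 \<and> F$1$0 = 0 \<and> F$0$1 = 0 \<and> F$2$0 = 0 \<and> F$1$1 = 0 \<and> F$0$2 = 0"
  by (simp add: ordn_def)

definition EN where "EN a20 a11 = 1 + sc (a20^2) * (U*U) + sc (2*a20*a11) * (U*V) + sc (1+a11^2) * (V*V)"
definition FN where "FN a20 a11 a02 = sc (a20*a11) * (U*U) + sc (a20*a02 + a11^2 + 1) * (U*V) + sc (a11*a02) * (V*V)"
definition GN where "GN a11 a02 = sc (1+a11^2) * (U*U) + sc (2*a11*a02) * (U*V) + sc (a02^2) * (V*V)"

lemma UU_nth[simp]: "(U*U) $ k $ l = (if k = 2 \<and> l = 0 then 1 else 0)"
  by (simp add: U_mult_nth) (auto simp: numeral_2_eq_2)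
lemma UV_nth[simp]: "(U*V) $ k $ l = (if k = 1 \<and> l = 1 then 1 else 0)"
  by (simp add: U_mult_nth)
lemma VV_nth[simp]: "(V*V) $ k $ l = (if k = 0 \<and> l = 2 then 1 else 0)"
  by (simp add: V_mult_nth) (auto simp: numeral_2_eq_2)
lemma one_nth2[simp]: "(1::R) $ k $ l = (if k = 0 \<and> l = 0 then 1 else 0)"
  by simp

lemma Z2_nth: "Z2 a20 a11 a02 $ k $ l = (if k = 2 \<and> l = 0 then a20/2 else if k = 1 \<and> l = 1 then a11
   else if k = 0 \<and> l = 2 then a02/2 else 0)"
proof -
  have "Z2 a20 a11 a02 = sc (a20/2) * (U*U) + sc a11 * (U*V) + sc (a02/2) * (V*V)"
    by (simp add: Z2_def mult.assoc)
  then show ?thesis by (simp del: UU_nth UV_nth VV_nth add: UU_nth UV_nth VV_nth sc_mult_nth)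
qed

lemma base_unique:
  fixes X Y Z EE FF GG :: R
  assumes a02: "a02 > 0"
    and nE: "ordn 3 (EE - EN a20 a11)" and nF: "ordn 3 (FF - FN a20 a11 a02)" and nG: "ordn 3 (GG - GN a11 a02)"
    and X: "ordn 2 (X - U)" and Y: "ordn 1 Y" and Z: "ordn 2 Z" and q: "Y $ 0 $ 1 > 0" and z02: "Z $ 0 $ 2 > 0"
    and eE: "ordn 3 (eE b m EE X Y Z)" and eF: "ordn 3 (eF b m FF X Y Z)" and eG: "ordn 3 (eG b m GG X Y Z)"
  shows "ordn 4 (X - U) \<and> ordn 2 (Y - V) \<and> ordn 3 (Z - Z2 a20 a11 a02)"
proof -
  define W where "W = X * Y"
  define f where "f = ff2 b m X Y"
  have X1: "ordn 1 X" using ordn_add[OF ordn_mono[OF X] ordn_U] by simp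
  have W2: "ordn 2 W" unfolding W_def by (rule ordn_mult'[OF X1 Y]) simp
  have fW: "f = W + beta b m Y" by (simp add: f_def W_def ff2_def)
  have be: "ordn 3 (beta b m Y)" by (rule ordn_beta[OF Y])
  have Wu: "ordn 1 (Du W)" using ordn_Du'[OF W2] by simp
  have Wv: "ordn 1 (Dv W)" using ordn_Dv'[OF W2] by simp
  have bu: "ordn 2 (Du (beta b m Y))" using ordn_Du'[OF be] by simp
  have bv: "ordn 2 (Dv (beta b m Y))" using ordn_Dv'[OF be] by simp
  have P: "ordn 3 ((A + dA) * (B + dB) - A * B)" if "ordn 1 A" "ordn 1 B" "ordn 2 dA" "ordn 2 dB" for A B dA dB :: R
  proof -
    have eq: "(A + dA) * (B + dB) - A * B = A * dB + dA * B + dA * dB" by (simp add: algebra_simps)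
    have 1: "ordn 3 (A * dB)" by (rule ordn_mult'[OF that(1) that(4)]) simp
    have 2: "ordn 3 (dA * B)" by (rule ordn_mult'[OF that(3) that(2)]) simp
    have 3: "ordn 3 (dA * dB)" by (rule ordn_mult'[OF that(3) that(4)]) simp
    show ?thesis unfolding eq using 1 2 3 by (intro ordn_add)
  qed
  define SE where "SE = Du X * Du X + Du W * Du W + Du Z * Du Z"
  define SF where "SF = Du X * Dv X + Du W * Dv W + Du Z * Dv Z"
  define SG where "SG = Dv X * Dv X + Dv W * Dv W + Dv Z * Dv Z"
  have hE: "ordn 3 (EN a20 a11 - SE)"
  proof -
    have eq: "EN a20 a11 - SE = eE b m EE X Y Z - (EE - EN a20 a11)
      + ((Du W + Du (beta b m Y)) * (Du W + Du (beta b m Y)) - Du W * Du W)"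
      unfolding eE_def SE_def f_def[symmetric] fW by (simp add: algebra_simps)
    show ?thesis unfolding eq by (intro ordn_add ordn_diff eE nE P Wu bu)
  qed
  have hF: "ordn 3 (FN a20 a11 a02 - SF)"
  proof -
    have eq: "FN a20 a11 a02 - SF = eF b m FF X Y Z - (FF - FN a20 a11 a02)
      + ((Du W + Du (beta b m Y)) * (Dv W + Dv (beta b m Y)) - Du W * Dv W)"
      unfolding eF_def SF_def f_def[symmetric] fW by (simp add: algebra_simps)
    show ?thesis unfolding eq by (intro ordn_add ordn_diff eF nF P Wu Wv bu bv)
  qed
  have hG: "ordn 3 (GN a11 a02 - SG)"
  proof -
    have eq: "GN a11 a02 - SG = eG b m GG X Y Z - (GG - GN a11 a02)
      + ((Dv W + Dv (beta b m Y)) * (Dv W + Dv (beta b m Y)) - Dv W * Dv W)"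
      unfolding eG_def SG_def f_def[symmetric] fW by (simp add: algebra_simps)
    show ?thesis unfolding eq by (intro ordn_add ordn_diff eG nG P Wv bv)
  qed
  have x00: "X$0$0 = 0" and x10: "X$1$0 = 1" and x01: "X$0$1 = 0"
    using X by (auto simp: ordn_def dest: spec[of _ 0] spec[of _ 1])
  have y00: "Y$0$0 = 0" using Y by (simp add: ordn_def)
  have z00: "Z$0$0 = 0" and z10: "Z$1$0 = 0" and z01: "Z$0$1 = 0"
    using Z by (auto simp: ordn_def dest: spec[of _ 0] spec[of _ 1])
  note c0 = x00 x10 x01 y00 z00 z10 z01
  note c = c0 c0[unfolded One_nat_def] c0[unfolded numeral_2_eq_2 One_nat_def]
  note ms0 = mult_00 mult_10 mult_01 mult_20 mult_11 mult_02
  note ms = ms0 ms0[unfolded One_nat_def] ms0[unfolded numeral_2_eq_2 One_nat_def]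
  have w0: "W$0$0 = 0" "W$1$0 = 0" "W$0$1 = 0" "W$2$0 = Y$1$0" "W$1$1 = Y$0$1" "W$0$2 = 0"
    by (simp_all add: W_def ms c del: fps_mult_nth_0 fps_mult_nth_1')
  note w = w0 w0[unfolded One_nat_def] w0[unfolded numeral_2_eq_2 One_nat_def]
  note sm = numeral_mult_nth0
  note hE' = ordnE3[OF hE] and hF' = ordnE3[OF hF] and hG' = ordnE3[OF hG]
  note nrm = numeral_2_eq_2 numeral_3_eq_3 One_nat_def
  note SS = ms c w sm nrm EN_def FN_def GN_def SE_def SF_def SG_def
  have E10: "X$2$0 = 0" using hE' by (simp add: SS del: fps_mult_nth_0 fps_mult_nth_1')
  have E01: "X$1$1 = 0" using hE' by (simp add: SS del: fps_mult_nth_0 fps_mult_nth_1')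
  have E20: "6 * X$3$0 + 4 * X$2$0 * X$2$0 + 4 * Y$1$0 * Y$1$0 + 4 * Z$2$0 * Z$2$0 = a20^2"
    using hE' by (simp add: SS del: fps_mult_nth_0 fps_mult_nth_1')
  have E11: "4 * X$2$1 + 4 * X$1$1 * X$2$0 + 4 * Y$0$1 * Y$1$0 + 4 * Z$1$1 * Z$2$0 = 2 * a20 * a11"
    using hE' by (simp add: SS del: fps_mult_nth_0 fps_mult_nth_1')
  have E02: "2 * X$1$2 + X$1$1 * X$1$1 + Y$0$1 * Y$0$1 + Z$1$1 * Z$1$1 = 1 + a11^2"
    using hE' by (simp add: SS del: fps_mult_nth_0 fps_mult_nth_1')
  have F01: "X$0$2 = 0" using hF' by (simp add: SS del: fps_mult_nth_0 fps_mult_nth_1')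
  have F20: "X$2$1 + 2*X$2$0*X$1$1 + 2*Y$1$0*Y$0$1 + 2*Z$2$0*Z$1$1 = a20*a11"
    using hF' by (simp add: SS del: fps_mult_nth_0 fps_mult_nth_1')
  have F11: "2*X$1$2 + 4*X$2$0*X$0$2 + X$1$1*X$1$1 + Y$0$1*Y$0$1 + 4*Z$2$0*Z$0$2 + Z$1$1*Z$1$1 = a20*a02 + a11^2 + 1"
    using hF' by (simp add: SS del: fps_mult_nth_0 fps_mult_nth_1')
  have F02: "3*X$0$3 + 2*X$1$1*X$0$2 + 2*Z$1$1*Z$0$2 = a11*a02"
    using hF' by (simp add: SS del: fps_mult_nth_0 fps_mult_nth_1')
  have G20: "X$1$1*X$1$1 + Y$0$1*Y$0$1 + Z$1$1*Z$1$1 = 1 + a11^2"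
    using hG' by (simp add: SS del: fps_mult_nth_0 fps_mult_nth_1')
  have G11: "4*X$1$1*X$0$2 + 4*Z$1$1*Z$0$2 = 2*a11*a02"
    using hG' by (simp add: SS del: fps_mult_nth_0 fps_mult_nth_1')
  have G02: "4*X$0$2*X$0$2 + 4*Z$0$2*Z$0$2 = a02^2"
    using hG' by (simp add: SS del: fps_mult_nth_0 fps_mult_nth_1')
  have z02v: "Z$0$2 = a02/2"
  proof -
    have "(2 * Z$0$2 - a02) * (2 * Z$0$2 + a02) = 0" using G02 F01 by (simp add: algebra_simps power2_eq_square)
    moreover have "2 * Z$0$2 + a02 > 0" using z02 a02 by simp
    ultimately show ?thesis by simp
  qed
  have z11v: "Z$1$1 = a11" using G11 E01 z02v a02 by (simp add: algebra_simps)
  have qv: "Y$0$1 = 1"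
  proof -
    have "(Y$0$1 - 1) * (Y$0$1 + 1) = 0" using G20 E01 z11v by (simp add: algebra_simps power2_eq_square)
    moreover have "Y$0$1 + 1 > 0" using q by simp
    ultimately show ?thesis by simp
  qed
  have x12v: "X$1$2 = 0" using E02 E01 qv z11v by (simp add: power2_eq_square)
  have z20v: "Z$2$0 = a20/2"
  proof -
    have "2 * a02 * Z$2$0 = a20 * a02" using F11 x12v E10 E01 qv z11v z02v by (simp add: algebra_simps power2_eq_square)
    then show ?thesis using a02 by (simp add: field_simps)
  qed
  have x03v: "X$0$3 = 0" using F02 E01 z11v z02v by simp
  have pv: "Y$1$0 = 0" and x21v: "X$2$1 = 0"
    using F20 E11 E10 E01 qv z11v z20v by (simp_all add: algebra_simps)
  have x30v: "X$3$0 = 0" using E20 E10 pv z20v by (simp add: power2_eq_square)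
  have xall: "(X - U) $ k $ l = 0" if "k + l < 4" for k l
    using enum4[OF that] x00 x10 x01 E10 E01 F01 x30v x21v x12v x03v by auto
  have yall: "(Y - V) $ k $ l = 0" if "k + l < 2" for k l
    using enum2[OF that] y00 pv qv by auto
  have zall: "(Z - Z2 a20 a11 a02) $ k $ l = 0" if "k + l < 3" for k l
    using enum3[OF that] z00 z10 z01 z20v z11v z02v by (auto simp: Z2_nth)
  show ?thesis using xall yall zall by (simp add: ordn_def)
qed

lemma P3: "ordn 1 A \<Longrightarrow> ordn 1 B \<Longrightarrow> ordn 2 dA \<Longrightarrow> ordn 2 dB \<Longrightarrow>
  ordn 3 ((A + dA) * (B + dB) - A * B)"
proof -
  assume a: "ordn 1 A" "ordn 1 B" "ordn 2 dA" "ordn 2 dB"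
  have eq: "(A + dA) * (B + dB) - A * B = A * dB + dA * B + dA * dB" by (simp add: algebra_simps)
  have 1: "ordn 3 (A * dB)" by (rule ordn_mult'[OF a(1) a(4)]) simp
  have 2: "ordn 3 (dA * B)" by (rule ordn_mult'[OF a(3) a(2)]) simp
  have 3: "ordn 3 (dA * dB)" by (rule ordn_mult'[OF a(3) a(4)]) simp
  show ?thesis unfolding eq using 1 2 3 by (intro ordn_add)
qed

lemma sc_pow2: "sc (a^2) = sc a * sc a" by (simp add: power2_eq_square)
lemma sc_2ab: "sc (2*a*b) = 2 * sc a * sc b" by (simp flip: sc_numeral)

lemma EN_eq: "EN a20 a11 = 1 + V*V + (sc a20*U + sc a11*V)*(sc a20*U + sc a11*V)"
  unfolding EN_def sc_pow2 sc_2ab sc_add[symmetric] sc_one[symmetric] by (simp add: algebra_simps)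
lemma FN_eq: "FN a20 a11 a02 = V*U + (sc a20*U + sc a11*V)*(sc a11*U + sc a02*V)"
  unfolding FN_def sc_pow2 sc_add[symmetric] sc_one[symmetric] by (simp add: algebra_simps)
lemma GN_eq: "GN a11 a02 = U*U + (sc a11*U + sc a02*V)*(sc a11*U + sc a02*V)"
  unfolding GN_def sc_pow2 sc_2ab sc_add[symmetric] sc_one[symmetric] by (simp add: algebra_simps)

lemma base_exists:
  fixes EE FF GG :: R
  assumes nE: "ordn 3 (EE - EN a20 a11)" and nF: "ordn 3 (FF - FN a20 a11 a02)" and nG: "ordn 3 (GG - GN a11 a02)"
  shows "ordn 3 (eE b m EE U V (Z2 a20 a11 a02)) \<and> ordn 3 (eF b m FF U V (Z2 a20 a11 a02))
     \<and> ordn 3 (eG b m GG U V (Z2 a20 a11 a02))"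
proof -
  have be: "ordn 3 (beta b m V)" by (rule ordn_beta[OF ordn_V])
  have bu: "ordn 2 (Du (beta b m V))" using ordn_Du'[OF be] by simp
  have bv: "ordn 2 (Dv (beta b m V))" using ordn_Dv'[OF be] by simp
  have e1: "eE b m EE U V (Z2 a20 a11 a02) = (EE - EN a20 a11) - ((V + Du (beta b m V)) * (V + Du (beta b m V)) - V * V)"
    unfolding eE_def ff2_def EN_eq Du_Z2 by (simp add: algebra_simps)
  have e2: "eF b m FF U V (Z2 a20 a11 a02) = (FF - FN a20 a11 a02) - ((V + Du (beta b m V)) * (U + Dv (beta b m V)) - V * U)"
    unfolding eF_def ff2_def FN_eq Du_Z2 Dv_Z2 by (simp add: algebra_simps)
  have e3: "eG b m GG U V (Z2 a20 a11 a02) = (GG - GN a11 a02) - ((U + Dv (beta b m V)) * (U + Dv (beta b m V)) - U * U)"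
    unfolding eG_def ff2_def GN_eq Dv_Z2 by (simp add: algebra_simps)
  show ?thesis unfolding e1 e2 e3
    by (intro conjI ordn_diff nE nF nG P3 ordn_U ordn_V bu bv)
qed

lemma deg_le_add: "deg_le d F \<Longrightarrow> deg_le d G \<Longrightarrow> deg_le d (F + G)"
  by (simp add: deg_le_def)
lemma deg_le_diff: "deg_le d F \<Longrightarrow> deg_le d G \<Longrightarrow> deg_le d (F - G)"
  by (simp add: deg_le_def)
lemma deg_le_mono: "deg_le d F \<Longrightarrow> d \<le> e \<Longrightarrow> deg_le e F"
  by (simp add: deg_le_def)
lemma ord_deg_zero: "ordn (Suc d) F \<Longrightarrow> deg_le d F \<Longrightarrow> F = 0"
  unfolding ordn_def deg_le_def
  by (intro fps_ext) (metis fps_zero_nth linorder_not_less less_Suc_eq_le)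

definition lev where
  "lev a20 a11 a02 b m EE FF GG n X Y Z \<longleftrightarrow>
     ordn 4 (X - U) \<and> ordn 2 (Y - V) \<and> ordn 3 (Z - Z2 a20 a11 a02) \<and>
     deg_le (n+1) (X - U) \<and> deg_le (n-1) Y \<and> deg_le n Z \<and>
     ordn (n+1) (eE b m EE X Y Z) \<and> ordn (n+1) (eF b m FF X Y Z) \<and> ordn (n+1) (eG b m GG X Y Z)"

lemma lev_2:
  assumes nE: "ordn 3 (EE - EN a20 a11)" and nF: "ordn 3 (FF - FN a20 a11 a02)" and nG: "ordn 3 (GG - GN a11 a02)"
  shows "lev a20 a11 a02 b m EE FF GG 2 U V (Z2 a20 a11 a02)"
  using base_exists[OF nE nF nG, of b m]
  by (simp add: lev_def deg_le_def Z2_nth numeral_3_eq_3)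

lemma lev_step:
  assumes a02: "a02 > 0" and n: "n \<ge> 2" and L: "lev a20 a11 a02 b m EE FF GG n X Y Z"
  shows "\<exists>X' Y' Z'. lev a20 a11 a02 b m EE FF GG (n+1) X' Y' Z'"
proof -
  have X4: "ordn 4 (X - U)" and Y2: "ordn 2 (Y - V)" and Z3: "ordn 3 (Z - Z2 a20 a11 a02)"
    and dX: "deg_le (n+1) (X - U)" and dY: "deg_le (n-1) Y" and dZ: "deg_le n Z"
    and RE: "ordn (n+1) (eE b m EE X Y Z)" and RF: "ordn (n+1) (eF b m FF X Y Z)" and RG: "ordn (n+1) (eG b m GG X Y Z)"
    using L by (simp_all add: lev_def)
  have n': "n + 1 \<ge> 2" using n by simp
  obtain xi eta zeta where xi: "ordn (n+1+1) xi" "deg_le (n+1+1) xi" and eta: "ordn (n+1-1) eta" "deg_le (n+1-1) eta"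
    and zeta: "ordn (n+1) zeta" "deg_le (n+1) zeta"
    and hE: "ordn (n+1+1) (LE a20 a11 a02 xi eta zeta - eE b m EE X Y Z)"
    and hF: "ordn (n+1+1) (LF a20 a11 a02 xi eta zeta - eF b m FF X Y Z)"
    and hG: "ordn (n+1+1) (LG a20 a11 a02 xi eta zeta - eG b m GG X Y Z)"
    using lin_exists[OF a02 n' RE RF RG, of a20 a11] by blast
  have X3: "ordn 3 (X - U)" by (rule ordn_mono[OF X4]) simp
  have n3: "n + 1 \<ge> 3" using n by simp
  note P = pert[OF X3 Y2 Z3 n3 xi(1) eta(1) zeta(1)]
  have E': "ordn (n+1+1) (eE b m EE (X+xi) (Y+eta) (Z+zeta))"
  proof -
    have "eE b m EE (X+xi) (Y+eta) (Z+zeta) = (eE b m EE (X+xi) (Y+eta) (Z+zeta) - (eE b m EE X Y Z -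
            LE a20 a11 a02 xi eta zeta)) - (LE a20 a11 a02 xi eta zeta - eE b m EE X Y Z)" by simp
    then show ?thesis using P(1) hE by (simp only: LE_def) (metis ordn_diff)
  qed
  have F': "ordn (n+1+1) (eF b m FF (X+xi) (Y+eta) (Z+zeta))"
  proof -
    have "eF b m FF (X+xi) (Y+eta) (Z+zeta) = (eF b m FF (X+xi) (Y+eta) (Z+zeta) - (eF b m FF X Y Z -
            LF a20 a11 a02 xi eta zeta)) - (LF a20 a11 a02 xi eta zeta - eF b m FF X Y Z)" by simp
    then show ?thesis using P(2) hF by (simp only: LF_def) (metis ordn_diff)
  qed
  have G': "ordn (n+1+1) (eG b m GG (X+xi) (Y+eta) (Z+zeta))"
  proof -
    have "eG b m GG (X+xi) (Y+eta) (Z+zeta) = (eG b m GG (X+xi) (Y+eta) (Z+zeta) - (eG b m GG X Y Z -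
            LG a20 a11 a02 xi eta zeta)) - (LG a20 a11 a02 xi eta zeta - eG b m GG X Y Z)" by simp
    then show ?thesis using P(3) hG by (simp only: LG_def) (metis ordn_diff)
  qed
  have b1: "ordn 4 (X + xi - U)"
  proof -
    have "ordn 4 ((X - U) + xi)" by (rule ordn_add[OF X4 ordn_mono[OF xi(1)]]) (use n in simp)
    then show ?thesis by (simp add: algebra_simps)
  qed
  have b2: "ordn 2 (Y + eta - V)"
  proof -
    have "ordn 2 ((Y - V) + eta)" by (rule ordn_add[OF Y2 ordn_mono[OF eta(1)]]) (use n in simp)
    then show ?thesis by (simp add: algebra_simps)
  qed
  have b3: "ordn 3 (Z + zeta - Z2 a20 a11 a02)"
  proof -
    have "ordn 3 ((Z - Z2 a20 a11 a02) + zeta)" by (rule ordn_add[OF Z3 ordn_mono[OF zeta(1)]]) (use n in simp)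
    then show ?thesis by (simp add: algebra_simps)
  qed
  have d1: "deg_le (n+1+1) (X + xi - U)"
  proof -
    have "deg_le (n+1+1) ((X - U) + xi)" by (rule deg_le_add[OF deg_le_mono[OF dX] xi(2)]) simp
    then show ?thesis by (simp add: algebra_simps)
  qed
  have d2: "deg_le (n+1-1) (Y + eta)" by (rule deg_le_add[OF deg_le_mono[OF dY] eta(2)]) simp
  have d3: "deg_le (n+1) (Z + zeta)" by (rule deg_le_add[OF deg_le_mono[OF dZ] zeta(2)]) simp
  show ?thesis unfolding lev_def using b1 b2 b3 d1 d2 d3 E' F' G' by blast
qed

lemma lev_exists:
  assumes a02: "a02 > 0" and n: "n \<ge> 2"
    and nE: "ordn 3 (EE - EN a20 a11)" and nF: "ordn 3 (FF - FN a20 a11 a02)" and nG: "ordn 3 (GG - GN a11 a02)"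
  shows "\<exists>X Y Z. lev a20 a11 a02 b m EE FF GG n X Y Z"
  using n
proof (induction n rule: dec_induct)
  case base then show ?case using lev_2[OF nE nF nG] by blast
next
  case (step n)
  then obtain X Y Z where "lev a20 a11 a02 b m EE FF GG n X Y Z" by blast
  from lev_step[OF a02 step.hyps(1) this] show ?case by simp
qed

lemma lev_unique:
  assumes a02: "a02 > 0" and m: "m \<ge> 2"
    and L1: "lev a20 a11 a02 b m EE FF GG m X1 Y1 Z1" and L2: "lev a20 a11 a02 b m EE FF GG m X2 Y2 Z2'"
  shows "X1 = X2 \<and> Y1 = Y2 \<and> Z1 = Z2'"
proof -
  note l1 = L1[unfolded lev_def] and l2 = L2[unfolded lev_def]
  have P: "ordn (n+1) (X2 - X1) \<and> ordn (n-1) (Y2 - Y1) \<and> ordn n (Z2' - Z1)" if "3 \<le> n" "n \<le> m + 1" for n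
    using that
  proof (induction n rule: dec_induct)
    case base
    have "ordn 4 ((X2 - U) - (X1 - U))" by (rule ordn_diff) (use l1 l2 in auto)
    moreover have "ordn 2 ((Y2 - V) - (Y1 - V))" by (rule ordn_diff) (use l1 l2 in auto)
    moreover have "ordn 3 ((Z2' - Z2 a20 a11 a02) - (Z1 - Z2 a20 a11 a02))" by (rule ordn_diff) (use l1 l2 in auto)
    ultimately show ?case by (simp add: numeral_eq_Suc)
  next
    case (step n)
    have nm: "n \<le> m" using step by simp
    have IH: "ordn (n+1) (X2 - X1)" "ordn (n-1) (Y2 - Y1)" "ordn n (Z2' - Z1)" using step by auto
    have X3: "ordn 3 (X1 - U)" using l1 by (auto intro: ordn_mono)
    have Y2': "ordn 2 (Y1 - V)" "ordn 3 (Z1 - Z2 a20 a11 a02)" using l1 by auto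
    note P = pert[OF X3 Y2'(1) Y2'(2) step.hyps(1) IH]
    have eqs: "X1 + (X2 - X1) = X2" "Y1 + (Y2 - Y1) = Y2" "Z1 + (Z2' - Z1) = Z2'" by simp_all
    have o1: "ordn (n+1) (eE b m EE X1 Y1 Z1)" "ordn (n+1) (eF b m FF X1 Y1 Z1)" "ordn (n+1) (eG b m GG X1 Y1 Z1)"
      using l1 nm by (auto intro: ordn_mono)
    have o2: "ordn (n+1) (eE b m EE X2 Y2 Z2')" "ordn (n+1) (eF b m FF X2 Y2 Z2')" "ordn (n+1) (eG b m GG X2 Y2 Z2')"
      using l2 nm by (auto intro: ordn_mono)
    have ll: "ordn (n+1) (A - (B - L))  \<Longrightarrow> ordn (n+1) A \<Longrightarrow> ordn (n+1) B \<Longrightarrow> ordn (n+1) L" for A B L :: R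
    proof -
      assume h: "ordn (n+1) (A - (B - L))" "ordn (n+1) A" "ordn (n+1) B"
      have "L = (A - (B - L)) - A + B" by simp
      then show "ordn (n+1) L" using h by (metis ordn_add ordn_diff)
    qed
    have LE: "ordn (n+1) (LE a20 a11 a02 (X2 - X1) (Y2 - Y1) (Z2' - Z1))"
      unfolding LE_def by (rule ll[OF P(1)[unfolded eqs] o2(1) o1(1)])
    have LF: "ordn (n+1) (LF a20 a11 a02 (X2 - X1) (Y2 - Y1) (Z2' - Z1))"
      unfolding LF_def by (rule ll[OF P(2)[unfolded eqs] o2(2) o1(2)])
    have LG: "ordn (n+1) (LG a20 a11 a02 (X2 - X1) (Y2 - Y1) (Z2' - Z1))"
      unfolding LG_def by (rule ll[OF P(3)[unfolded eqs] o2(3) o1(3)])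
    have n2: "n \<ge> 2" using step by simp
    show ?case using lin_unique[OF a02 n2 IH LE LF LG] by simp
  qed
  have Pm: "ordn (m+2) (X2 - X1)" "ordn m (Y2 - Y1)" "ordn (m+1) (Z2' - Z1)"
    using P[of "m+1"] m by auto
  have dX: "deg_le (m+1) (X2 - X1)"
  proof -
    have "deg_le (m+1) ((X2 - U) - (X1 - U))" by (rule deg_le_diff) (use l1 l2 in auto)
    then show ?thesis by simp
  qed
  have dY: "deg_le (m-1) (Y2 - Y1)" by (rule deg_le_diff) (use l1 l2 in auto)
  have dZ: "deg_le m (Z2' - Z1)" by (rule deg_le_diff) (use l1 l2 in auto)
  have "X2 - X1 = 0" by (rule ord_deg_zero[OF _ dX]) (use Pm in simp)
  moreover have "Y2 - Y1 = 0" by (rule ord_deg_zero[OF _ dY]) (use Pm m in simp)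
  moreover have "Z2' - Z1 = 0" by (rule ord_deg_zero[OF _ dZ]) (use Pm in simp)
  ultimately show ?thesis by simp
qed

lemma Phi_monom_nth: "Phi (fps2_monom a b) $ k $ l = (if k = a \<and> l = b then 1 else 0)"
  by (simp add: fps2_monom_def)
lemma Phi_m20: "Phi (fps2_monom 2 0) = U * U"
  by (intro fps_ext) (simp add: fps2_monom_def)
lemma Phi_m11: "Phi (fps2_monom 1 1) = U * V"
  by (intro fps_ext) (simp add: fps2_monom_def)
lemma Phi_m02: "Phi (fps2_monom 0 2) = V * V"
  by (intro fps_ext) (simp add: fps2_monom_def)
lemmas Phi_m11' = Phi_m11[unfolded One_nat_def]

lemma norm_R:
  assumes "normalized_EFG a20 a11 a02 E F G"
  shows "ordn 3 (Phi E - EN a20 a11)" "ordn 3 (Phi F - FN a20 a11 a02)" "ordn 3 (Phi G - GN a11 a02)"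
  using assms unfolding normalized_EFG_def Phi_order
  by (simp_all add: Phi_diff Phi_add Phi_scale Phi_const Phi_m20 Phi_m11 Phi_m11' Phi_m02 EN_def FN_def GN_def)

definition Psi :: "R \<Rightarrow> fps2" where "Psi F = (\<lambda>k l. fact k * fact l * F $ k $ l)"
lemma Phi_Psi: "Phi (Psi F) = F"
  by (intro fps_ext) (simp add: Psi_def)

lemma fs_iff: "formal_solution E F G b m X Y Z \<longleftrightarrow>
  ordn 2 (Phi X - U) \<and> deg_le (m+1) (Phi X - U) \<and> ordn 1 (Phi Y) \<and> deg_le (m-1) (Phi Y) \<and>
  ordn 2 (Phi Z) \<and> deg_le m (Phi Z) \<and> Phi Y $ 0 $ 1 > 0 \<and> Phi Z $ 0 $ 2 > 0 \<and>
  ordn (m+1) (eE b m (Phi E) (Phi X) (Phi Y) (Phi Z)) \<and> ordn (m+1) (eF b m (Phi F) (Phi X) (Phi Y) (Phi Z)) \<and>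
  ordn (m+1) (eG b m (Phi G) (Phi X) (Phi Y) (Phi Z))"
proof -
  have fpos: "fact k * fact l > (0::real)" for k l by simp
  have px: "(Phi X - U) $ k $ l = 0 \<longleftrightarrow> X k l = (if k = 1 \<and> l = 0 then 1 else 0)" for k l
    using fpos[of k l] by (auto simp: field_simps)
  have py: "Phi Y $ k $ l = 0 \<longleftrightarrow> Y k l = 0" for k l using fpos[of k l] by simp
  have pz: "Phi Z $ k $ l = 0 \<longleftrightarrow> Z k l = 0" for k l using fpos[of k l] by simp
  have c1: "(\<forall>k l. (k + l < 2 \<or> m + 1 < k + l) \<longrightarrow> X k l = (if k = 1 \<and> l = 0 then 1 else 0)) \<longleftrightarrow>
     ordn 2 (Phi X - U) \<and> deg_le (m+1) (Phi X - U)"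
    unfolding ordn_def deg_le_def px by blast
  have c2: "(\<forall>k l. (k + l < 1 \<or> m - 1 < k + l) \<longrightarrow> Y k l = 0) \<longleftrightarrow> ordn 1 (Phi Y) \<and> deg_le (m-1) (Phi Y)"
    unfolding ordn_def deg_le_def py by blast
  have c3: "(\<forall>k l. (k + l < 2 \<or> m < k + l) \<longrightarrow> Z k l = 0) \<longleftrightarrow> ordn 2 (Phi Z) \<and> deg_le m (Phi Z)"
    unfolding ordn_def deg_le_def pz by blast
  have c4: "Y 0 1 > 0 \<longleftrightarrow> Phi Y $ 0 $ 1 > 0" by simp
  have c5: "Z 0 2 > 0 \<longleftrightarrow> Phi Z $ 0 $ 2 > 0" by simp
  have ph: "Phi (fps2_add (fps2_mult X Y) (beta_comp b m Y)) = ff2 b m (Phi X) (Phi Y)"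
    by (simp add: Phi_add Phi_mult Phi_beta ff2_def)
  have c6: "(let f = (X, fps2_add (fps2_mult X Y) (beta_comp b m Y), Z);
          fu = (case f of (f1, f2, f3) \<Rightarrow> (fps2_du f1, fps2_du f2, fps2_du f3));
          fv = (case f of (f1, f2, f3) \<Rightarrow> (fps2_dv f1, fps2_dv f2, fps2_dv f3))
      in fps2_order_ge (m + 1) (fps2_diff E (fps2_dot fu fu)) \<and>
         fps2_order_ge (m + 1) (fps2_diff F (fps2_dot fu fv)) \<and>
         fps2_order_ge (m + 1) (fps2_diff G (fps2_dot fv fv))) \<longleftrightarrow>
     ordn (m+1) (eE b m (Phi E) (Phi X) (Phi Y) (Phi Z)) \<and> ordn (m+1) (eF b m (Phi F) (Phi X) (Phi Y) (Phi Z)) \<and>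
     ordn (m+1) (eG b m (Phi G) (Phi X) (Phi Y) (Phi Z))"
    unfolding Let_def Phi_order
    by (simp add: fps2_dot_def Phi_diff Phi_add Phi_mult Phi_du Phi_dv Phi_beta ff2_def eE_def eF_def eG_def)
  show ?thesis unfolding formal_solution_def c1 c2 c3 c4 c5 c6 by blast
qed

theorem mainTheorem5:
  fixes a20 a11 a02 :: real and E F G :: fps2 and b :: "nat \<Rightarrow> real" and m :: nat
  assumes "a02 > 0"
    and "normalized_EFG a20 a11 a02 E F G"
    and "m \<ge> 2"
  shows "\<exists>!(X, Y, Z). formal_solution E F G b m X Y Z"
proof -
  note a02 = assms(1) and m = assms(3)
  note nR = norm_R[OF assms(2)]
  obtain X' Y' Z' where L: "lev a20 a11 a02 b m (Phi E) (Phi F) (Phi G) m X' Y' Z'"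
    using lev_exists[OF a02 m nR] by blast
  have solR_lev: "lev a20 a11 a02 b m (Phi E) (Phi F) (Phi G) m (Phi X) (Phi Y) (Phi Z)"
    if fs: "formal_solution E F G b m X Y Z" for X Y Z
  proof -
    note h = fs[unfolded fs_iff]
    have m3: "3 \<le> m + 1" using m by simp
    have "ordn 4 (Phi X - U) \<and> ordn 2 (Phi Y - V) \<and> ordn 3 (Phi Z - Z2 a20 a11 a02)"
      by (rule base_unique[OF a02 nR]) (use h in \<open>auto intro: ordn_mono[OF _ m3]\<close>)
    then show ?thesis using h by (simp add: lev_def)
  qed
  have ex: "formal_solution E F G b m (Psi X') (Psi Y') (Psi Z')"
  proof -
    note l = L[unfolded lev_def]
    have X2: "ordn 2 (X' - U)" using l by (auto intro: ordn_mono)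
    have Y1: "ordn 1 Y'"
    proof -
      have "ordn 1 ((Y' - V) + V)" by (rule ordn_add[OF ordn_mono[of 2] ordn_V]) (use l in auto)
      then show ?thesis by simp
    qed
    have Z2o: "ordn 2 Z'"
    proof -
      have "ordn 2 ((Z' - Z2 a20 a11 a02) + Z2 a20 a11 a02)"
        by (rule ordn_add[OF ordn_mono[of 3]]) (use l in \<open>auto simp: ordn_def Z2_nth\<close>)
      then show ?thesis by simp
    qed
    have y01: "Y' $ 0 $ 1 > 0"
    proof -
      have "(Y' - V) $ 0 $ 1 = 0" using l by (simp add: ordn_def)
      then show ?thesis by simp
    qed
    have z02: "Z' $ 0 $ 2 > 0"
    proof -
      have "(Z' - Z2 a20 a11 a02) $ 0 $ 2 = 0" using l by (simp add: ordn_def)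
      then show ?thesis using a02 by (simp add: Z2_nth)
    qed
    show ?thesis unfolding fs_iff Phi_Psi using l X2 Y1 Z2o y01 z02 by simp
  qed
  show ?thesis
  proof (rule ex1I[of _ "(Psi X', Psi Y', Psi Z')"])
    show "case (Psi X', Psi Y', Psi Z') of (X, Y, Z) \<Rightarrow> formal_solution E F G b m X Y Z" using ex by simp
  next
    fix p assume p: "case p of (X, Y, Z) \<Rightarrow> formal_solution E F G b m X Y Z"
    obtain X Y Z where pe: "p = (X, Y, Z)" by (cases p) auto
    have fs: "formal_solution E F G b m X Y Z" using p pe by simp
    have "Phi X = X' \<and> Phi Y = Y' \<and> Phi Z = Z'"
      using lev_unique[OF a02 m solR_lev[OF fs] L] by simp
    then have "Phi X = Phi (Psi X') \<and> Phi Y = Phi (Psi Y') \<and> Phi Z = Phi (Psi Z')" by (simp add: Phi_Psi)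
    then show "p = (Psi X', Psi Y', Psi Z')" using pe by (simp add: Phi_eq_iff)
  qed
qed


end
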